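(* Assume $n_1,n_2\in[1,2]$ and (IE). Then for all $\varepsilon\in(0,1)$ and $T>0$ there exists $C(\varepsilon,T)>0$ such that, with $\hat T:=\min\{T,T_{max,\varepsilon}\}$, $$\int_\Omega u_{\varepsilon x}^2(x,t)\,dx+\int_\Omega v_{\varepsilon x}^2(x,t)\,dx\le C(\varepsilon,T)\quad\text{and}\quad\|u_\varepsilon(\cdot,t)\|_{L^\infty(\Omega)}+\|v_\varepsilon(\cdot,t)\|_{L^\infty(\Omega)}\le C(\varepsilon,T)$$ for all $t\in(0,\hat T)$.
   Context: Let $\Omega\subset\mathbb{R}$ be a bounded open interval, $D_i,a_i,\lambda_i,\chi_i>0$ ($i=1,2$), and fix $\alpha\in(0,\frac12]$. Assumption (IE): $u_0,v_0\in W^{1,2}(\Omega)$ with $u_0>0,v_0>0$ in $\overline\Omega$; for each $\varepsilon\in(0,1)$, $u_{0\varepsilon},v_{0\varepsilon}\in C^5(\overline\Omega)$ with $u_{0\varepsilon x}=u_{0\varepsilon xxx}=v_{0\varepsilon x}=v_{0\varepsilon xxx}=0$ on $\partial\Omega$; $\frac12\inf_\Omega u_0\le u_{0\varepsilon}\le u_0+1$, $\frac12\inf_\Omega v_0\le v_{0\varepsilon}\le v_0+1$ in $\Omega$; $\int_\Omega u_{0\varepsilon x}^2\le\int_\Omega u_{0x}^2+1$, $\int_\Omega v_{0\varepsilon x}^2\le\int_\Omega v_{0x}^2+1$; $u_{0\varepsilon}\to u_0$, $v_{0\varepsilon}\to v_0$ a.e. as $\varepsilon\searrow0$. Approximating problem: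 $u_t=-\varepsilon\big(\frac{u^4}{u^{4-n_1}+\varepsilon}u_{xxx}\big)_x+\varepsilon^{\alpha/2}(u^{-\alpha}u_x)_x+D_1u_{xx}-\chi_1\big(\frac{u^{5-n_1}}{u^{4-n_1}+\varepsilon}v_x\big)_x+\frac{3u^3}{3u^2+\varepsilon}(\lambda_1-u+a_1v)$, $v_t=-\varepsilon\big(\frac{v^4}{v^{4-n_2}+\varepsilon}v_{xxx}\big)_x+\varepsilon^{\alpha/2}(v^{-\alpha}v_x)_x+D_2v_{xx}+\chi_2\big(\frac{v^{5-n_2}}{v^{4-n_2}+\varepsilon}u_x\big)_x+\frac{3v^3}{3v^2+\varepsilon}(\lambda_2-v-a_2u)$ in $\Omega\times(0,\infty)$, $u_x=v_x=u_{xxx}=v_{xxx}=0$ on $\partial\Omega$, $u(\cdot,0)=u_{0\varepsilon}$, $v(\cdot,0)=v_{0\varepsilon}$. For each $\varepsilon$ it has a classical solution $(u_\varepsilon,v_\varepsilon)$, positive in $\overline\Omega\times[0,T_{max,\varepsilon})$, belonging to $\bigcap_{s\in(3/2,2)}C^0([0,T_{max,\varepsilon});W^{s,2}(\Omega))\cap C^{4,1}(\overline\Omega\times(0,T_{max,\varepsilon}))$, where $T_{max,\varepsilon}\in(0,\infty]$ is maximal: either $T_{max,\varepsilon}=\infty$ or $\limsup_{t\nearrow T_{max,\varepsilon}}\{\|u_\varepsilon(\cdot,t)\|_{W^{2,2}}+\|1/u_\varepsilon(\cdot,t)\|_{L^\infty}+\|v_\varepsilon(\cdot,t)\|_{W^{2,2}}+\|1/v_\varepsilon(\cdot,t)\|_{L^\infty}\}=\infty$.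 *)

theory Defs
  imports "HOL-Analysis.Analysis"
begin

definition tint :: "ereal \<Rightarrow> real set" where
  "tint Tm = {t. 0 < t \<and> ereal t < Tm}"

definition tint0 :: "ereal \<Rightarrow> real set" where
  "tint0 Tm = {t. 0 \<le> t \<and> ereal t < Tm}"

text \<open>W^{1,2}(a,b) initial datum (continuous representative u0 with weak derivative u0x in L^2),
  positive on the closed interval.\<close>
definition W12_pos :: "real \<Rightarrow> real \<Rightarrow> (real \<Rightarrow> real) \<Rightarrow> (real \<Rightarrow> real) \<Rightarrow> bool" where
  "W12_pos a b u0 u0x \<longleftrightarrow>
     u0x absolutely_integrable_on {a..b} \<and>
     (\<lambda>x. (u0x x)\<^sup>2) integrable_on {a..b} \<and>
     (\<forall>x\<in>{a..b}. (u0x has_integral (u0 x - u0 a)) {a..x}) \<and>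
     (\<forall>x\<in>{a..b}. 0 < u0 x)"

text \<open>Approximate initial data: U eps k is the k-th derivative of u_{0 eps}, k = 0..5.\<close>
definition approx_data ::
  "real \<Rightarrow> real \<Rightarrow> (real \<Rightarrow> real) \<Rightarrow> (real \<Rightarrow> real) \<Rightarrow> (real \<Rightarrow> nat \<Rightarrow> real \<Rightarrow> real) \<Rightarrow> bool" where
  "approx_data a b u0 u0x U \<longleftrightarrow>
     (\<forall>eps\<in>{0<..<1}.
        (\<forall>k<5. \<forall>x\<in>{a..b}. (U eps k has_real_derivative U eps (Suc k) x) (at x within {a..b})) \<and>
        continuous_on {a..b} (U eps 5) \<and>
        U eps 1 a = 0 \<and> U eps 1 b = 0 \<and> U eps 3 a = 0 \<and> U eps 3 b = 0 \<and>
        (\<forall>x\<in>{a<..<b}. (INF y\<in>{a<..<b}. u0 y) / 2 \<le> U eps 0 x \<and> U eps 0 x \<le> u0 x + 1) \<and>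
        integral {a..b} (\<lambda>x. (U eps 1 x)\<^sup>2) \<le> integral {a..b} (\<lambda>x. (u0x x)\<^sup>2) + 1) \<and>
     (AE x in lborel. x \<in> {a<..<b} \<longrightarrow> ((\<lambda>eps. U eps 0 x) \<longlongrightarrow> u0 x) (at_right 0))"

text \<open>Classical regularity of one solution component on [a,b] x (0,Tm), with explicit
  derivative functions: w_x, w_xx, w_xxx, w_xxxx (one-sided at the endpoints) and w_t;
  in addition w and w_x are continuous up to t = 0 (consequence of
  C^0([0,Tm); W^{s,2}) with s > 3/2).\<close>
definition classical_comp ::
  "real \<Rightarrow> real \<Rightarrow> ereal \<Rightarrow> (real \<Rightarrow> real \<Rightarrow> real) \<Rightarrow> (real \<Rightarrow> real \<Rightarrow> real) \<Rightarrow> (real \<Rightarrow> real \<Rightarrow> real)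
    \<Rightarrow> (real \<Rightarrow> real \<Rightarrow> real) \<Rightarrow> (real \<Rightarrow> real \<Rightarrow> real) \<Rightarrow> (real \<Rightarrow> real \<Rightarrow> real) \<Rightarrow> bool" where
  "classical_comp a b Tm w wx wxx wxxx wxxxx wt \<longleftrightarrow>
     (\<forall>t\<in>tint0 Tm. \<forall>x\<in>{a..b}. ((\<lambda>y. w y t) has_real_derivative wx x t) (at x within {a..b})) \<and>
     (\<forall>t\<in>tint Tm. \<forall>x\<in>{a..b}.
        ((\<lambda>y. wx y t) has_real_derivative wxx x t) (at x within {a..b}) \<and>
        ((\<lambda>y. wxx y t) has_real_derivative wxxx x t) (at x within {a..b}) \<and>
        ((\<lambda>y. wxxx y t) has_real_derivative wxxxx x t) (at x within {a..b}) \<and>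
        ((\<lambda>s. w x s) has_real_derivative wt x t) (at t)) \<and>
     continuous_on ({a..b} \<times> tint0 Tm) (\<lambda>(x,t). w x t) \<and>
     continuous_on ({a..b} \<times> tint0 Tm) (\<lambda>(x,t). wx x t) \<and>
     continuous_on ({a..b} \<times> tint Tm) (\<lambda>(x,t). wxx x t) \<and>
     continuous_on ({a..b} \<times> tint Tm) (\<lambda>(x,t). wxxx x t) \<and>
     continuous_on ({a..b} \<times> tint Tm) (\<lambda>(x,t). wxxxx x t) \<and>
     continuous_on ({a..b} \<times> tint Tm) (\<lambda>(x,t). wt x t)"

text \<open>Flux and reaction terms of the approximating problem (u-equation: divergence form
  u_t = (fluxU)_x + reacU; similarly for v).\<close>
definition fluxU :: "real \<Rightarrow> real \<Rightarrow> real \<Rightarrow> real \<Rightarrow> real \<Rightarrow> real \<Rightarrow> real \<Rightarrow> real \<Rightarrow> real \<Rightarrow> real" where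
  "fluxU eps alpha D chi n w wx wxxx zx =
     - eps * (w ^ 4 / (w powr (4 - n) + eps)) * wxxx
     + eps powr (alpha / 2) * (w powr (- alpha) * wx)
     + D * wx
     - chi * (w powr (5 - n) / (w powr (4 - n) + eps)) * zx"

definition fluxV :: "real \<Rightarrow> real \<Rightarrow> real \<Rightarrow> real \<Rightarrow> real \<Rightarrow> real \<Rightarrow> real \<Rightarrow> real \<Rightarrow> real \<Rightarrow> real" where
  "fluxV eps alpha D chi n w wx wxxx zx =
     - eps * (w ^ 4 / (w powr (4 - n) + eps)) * wxxx
     + eps powr (alpha / 2) * (w powr (- alpha) * wx)
     + D * wx
     + chi * (w powr (5 - n) / (w powr (4 - n) + eps)) * zx"

definition reacU :: "real \<Rightarrow> real \<Rightarrow> real \<Rightarrow> real \<Rightarrow> real \<Rightarrow> real" where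
  "reacU eps lam aa u v = 3 * u ^ 3 / (3 * u\<^sup>2 + eps) * (lam - u + aa * v)"

definition reacV :: "real \<Rightarrow> real \<Rightarrow> real \<Rightarrow> real \<Rightarrow> real \<Rightarrow> real" where
  "reacV eps lam aa u v = 3 * v ^ 3 / (3 * v\<^sup>2 + eps) * (lam - v - aa * u)"

definition W22n :: "real \<Rightarrow> real \<Rightarrow> (real \<Rightarrow> real) \<Rightarrow> (real \<Rightarrow> real) \<Rightarrow> (real \<Rightarrow> real) \<Rightarrow> real" where
  "W22n a b w wx wxx = sqrt (integral {a..b} (\<lambda>x. (w x)\<^sup>2 + (wx x)\<^sup>2 + (wxx x)\<^sup>2))"

definition Linf :: "real \<Rightarrow> real \<Rightarrow> (real \<Rightarrow> real) \<Rightarrow> real" where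
  "Linf a b f = (SUP x\<in>{a<..<b}. \<bar>f x\<bar>)"

text \<open>Maximality of Tm: either Tm = infinity or limsup_{t -> Tm} N(t) = infinity.\<close>
definition maximal_time :: "ereal \<Rightarrow> (real \<Rightarrow> real) \<Rightarrow> bool" where
  "maximal_time Tm N \<longleftrightarrow> Tm = \<infinity> \<or>
     (\<forall>M. \<forall>s. ereal s < Tm \<longrightarrow> (\<exists>t\<in>tint Tm. s < t \<and> M < N t))"

end

theory Submission
  imports Defs "HOL-Analysis.Analysis"
begin


lemma deriv_cont_on:
  assumes "\<forall>x\<in>S. (f has_real_derivative f' x) (at x within S)"
  shows "continuous_on S f"
  using assms DERIV_continuous continuous_on_eq_continuous_within by blast

lemma ibp_zero:
  fixes P P' :: "real \<Rightarrow> real"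
  assumes "a \<le> b" "\<And>x. x \<in> {a..b} \<Longrightarrow> (P has_real_derivative P' x) (at x within {a..b})"
    "P a = 0" "P b = 0"
  shows "(P' has_integral 0) {a..b}"
  using fundamental_theorem_of_calculus[of a b P P'] assms
  by (simp add: has_real_derivative_iff_has_vector_derivative)

locale ft =
  fixes a b :: real and p px pxx pxxx :: "real \<Rightarrow> real"
  assumes ab: "a < b"
    and d0: "\<forall>x\<in>{a..b}. (p has_real_derivative px x) (at x within {a..b})"
    and d1: "\<forall>x\<in>{a..b}. (px has_real_derivative pxx x) (at x within {a..b})"
    and d2: "\<forall>x\<in>{a..b}. (pxx has_real_derivative pxxx x) (at x within {a..b})"
    and c3: "continuous_on {a..b} pxxx"
    and ppos: "\<forall>x\<in>{a..b}. 0 < p x"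
    and bca: "px a = 0" and bcb: "px b = 0"
begin

lemma c0: "continuous_on {a..b} p" using d0 deriv_cont_on by blast
lemma c1: "continuous_on {a..b} px" using d1 deriv_cont_on by blast
lemma c2: "continuous_on {a..b} pxx" using d2 deriv_cont_on by blast

lemma cpow: "continuous_on {a..b} (\<lambda>x. p x powr r)"
  by (rule continuous_on_powr) (use c0 ppos in \<open>auto intro: continuous_on_const\<close>)

lemma int_c: "continuous_on {a..b} (f::real\<Rightarrow>real) \<Longrightarrow> f integrable_on {a..b}"
  by (rule integrable_continuous_interval)

lemma px_pxxx: "integral {a..b} (\<lambda>x. px x * pxxx x) = - integral {a..b} (\<lambda>x. (pxx x)\<^sup>2)"
proof -
  have "((\<lambda>x. pxx x * pxx x + px x * pxxx x) has_integral 0) {a..b}"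
    apply (rule ibp_zero[where P="\<lambda>x. px x * pxx x"])
    using ab bca bcb d1 d2 by (auto intro!: derivative_eq_intros)
  then have "integral {a..b} (\<lambda>x. (pxx x)\<^sup>2 + px x * pxxx x) = 0"
    by (simp add: power2_eq_square integral_unique)
  moreover have "integral {a..b} (\<lambda>x. (pxx x)\<^sup>2 + px x * pxxx x) =
      integral {a..b} (\<lambda>x. (pxx x)\<^sup>2) + integral {a..b} (\<lambda>x. px x * pxxx x)"
    by (intro integral_add int_c continuous_intros c1 c2 c3)
  ultimately show ?thesis by linarith
qed

lemma alpha_term:
  assumes al: "0 < al" "al \<le> 1/2"
  shows "integral {a..b} (\<lambda>x. p x powr (-al) * px x * pxxx x) \<le> 0"
proof -
  define w where "w x = p x powr (-al-2)" for x
  have wpos: "0 < w x" if "x \<in> {a..b}" for x using ppos[rule_format, OF that] by (simp add: w_def)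
  have p1: "p x powr (-al-1) = w x * p x" if "x \<in> {a..b}" for x
  proof -
    have e: "-al-1 = (-al-2) + 1" by simp
    have "p x powr (-al-1) = p x powr ((-al-2) + 1)" by (subst e) (rule refl)
    also have "\<dots> = p x powr (-al-2) * p x powr 1" by (rule powr_add)
    finally show ?thesis using ppos[rule_format, OF that] by (simp add: w_def)
  qed
  have p0: "p x powr (-al) = w x * (p x)\<^sup>2" if "x \<in> {a..b}" for x
  proof -
    have e: "-al = (-al-2) + 2" by simp
    have "p x powr (-al) = p x powr ((-al-2) + 2)" by (subst e) (rule refl)
    also have "\<dots> = p x powr (-al-2) * p x powr 2" by (rule powr_add)
    finally show ?thesis using ppos[rule_format, OF that] by (simp add: w_def powr_numeral)
  qed
  define A where "A = integral {a..b} (\<lambda>x. w x * (p x)\<^sup>2 * (pxx x)\<^sup>2)"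
  define B where "B = integral {a..b} (\<lambda>x. w x * (px x)^4)"
  define Cc where "Cc = integral {a..b} (\<lambda>x. w x * p x * (px x)\<^sup>2 * pxx x)"
  define I where "I = integral {a..b} (\<lambda>x. w x * (p x)\<^sup>2 * px x * pxxx x)"
  have cw: "continuous_on {a..b} w" unfolding w_def by (rule cpow)
  note cc = cw c0 c1 c2 c3
  have h1: "((\<lambda>x. -al * (w x * p x) * px x * px x * pxx x + w x * (p x)\<^sup>2 * pxx x * pxx x
              + w x * (p x)\<^sup>2 * px x * pxxx x) has_integral 0) {a..b}"
  proof (rule ibp_zero[where P="\<lambda>x. p x powr (-al) * px x * pxx x"])
    fix x assume x: "x \<in> {a..b}"
    have px0: "p x \<noteq> 0" "0 < p x" using ppos[rule_format, OF x] by auto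
    show "((\<lambda>x. p x powr (-al) * px x * pxx x) has_real_derivative
       -al * (w x * p x) * px x * px x * pxx x + w x * (p x)\<^sup>2 * pxx x * pxx x
              + w x * (p x)\<^sup>2 * px x * pxxx x) (at x within {a..b})"
      using d0 d1 d2 px0 x
      by (auto intro!: derivative_eq_intros simp: p1[OF x] p0[OF x] algebra_simps)
  qed (use ab bca bcb in auto)
  have e1: "-al * Cc + A + I = 0"
  proof -
    have "integral {a..b} (\<lambda>x. -al * (w x * p x) * px x * px x * pxx x + w x * (p x)\<^sup>2 * pxx x * pxx x
              + w x * (p x)\<^sup>2 * px x * pxxx x) = 0" using h1 by (rule integral_unique)
    moreover have "integral {a..b} (\<lambda>x. -al * (w x * p x) * px x * px x * pxx x + w x * (p x)\<^sup>2 * pxx x * pxx x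
              + w x * (p x)\<^sup>2 * px x * pxxx x) = -al * Cc + A + I"
      unfolding A_def Cc_def I_def
      apply (subst integral_add, (intro int_c continuous_intros cc)+)+
      apply (subst integral_mult_right[symmetric])
      apply (simp add: power2_eq_square mult.commute mult.left_commute mult.assoc)
      done
    ultimately show ?thesis by simp
  qed
  have h2: "((\<lambda>x. -(al+1) * w x * (px x)^4 + 3 * (w x * p x * (px x)\<^sup>2 * pxx x)) has_integral 0) {a..b}"
  proof (rule ibp_zero[where P="\<lambda>x. p x powr (-al-1) * (px x)^3"])
    fix x assume x: "x \<in> {a..b}"
    have px0: "p x \<noteq> 0" "0 < p x" using ppos[rule_format, OF x] by auto
    have p2: "p x powr (-al-1-1) = w x" unfolding w_def by (simp add: algebra_simps)
    have p2b: "p x powr (-al-2) = w x" unfolding w_def by simp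
    show "((\<lambda>x. p x powr (-al-1) * (px x)^3) has_real_derivative
       -(al+1) * w x * (px x)^4 + 3 * (w x * p x * (px x)\<^sup>2 * pxx x)) (at x within {a..b})"
      using d0 d1 d2 px0 x
      by (auto intro!: derivative_eq_intros simp: p1[OF x] p2 p2b algebra_simps power2_eq_square power3_eq_cube power4_eq_xxxx)
  qed (use ab bca bcb in auto)
  have e2: "-(al+1) * B + 3 * Cc = 0"
  proof -
    have "integral {a..b} (\<lambda>x. -(al+1) * w x * (px x)^4 + 3 * (w x * p x * (px x)\<^sup>2 * pxx x)) = 0"
      using h2 by (rule integral_unique)
    moreover have "integral {a..b} (\<lambda>x. -(al+1) * w x * (px x)^4 + 3 * (w x * p x * (px x)\<^sup>2 * pxx x))
       = -(al+1) * B + 3 * Cc"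
      unfolding B_def Cc_def
      apply (subst integral_add, (intro int_c continuous_intros cc)+)+
      apply (subst integral_mult_right[symmetric])+
      apply (simp add: mult.assoc)
      done
    ultimately show ?thesis by simp
  qed
  define lam where "lam = (al+1)/3"
  have e3: "A - 2*lam*Cc + lam^2 * B \<ge> 0"
  proof -
    have "0 \<le> integral {a..b} (\<lambda>x. w x * (p x * pxx x - lam * (px x)\<^sup>2)\<^sup>2)"
      by (rule integral_nonneg) (auto intro!: int_c continuous_intros cc simp: less_imp_le[OF wpos])
    also have "integral {a..b} (\<lambda>x. w x * (p x * pxx x - lam * (px x)\<^sup>2)\<^sup>2) =
       integral {a..b} (\<lambda>x. w x * (p x)\<^sup>2 * (pxx x)\<^sup>2 + (-2*lam) * (w x * p x * (px x)\<^sup>2 * pxx x) + lam^2 * (w x * (px x)^4))"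
      by (rule integral_cong) (simp add: algebra_simps power2_eq_square power4_eq_xxxx)
    also have "\<dots> = A - 2*lam*Cc + lam^2 * B"
      unfolding A_def B_def Cc_def
      apply (subst integral_add, (intro int_c continuous_intros cc)+)+
      apply (subst integral_mult_right)+
      apply simp
      done
    finally show ?thesis .
  qed
  have Bnn: "B \<ge> 0" unfolding B_def
    by (rule integral_nonneg) (auto intro!: int_c continuous_intros cc simp: less_imp_le[OF wpos])
  have CcB: "Cc = (al+1)/3 * B" using e2 by (simp add: field_simps)
  moreover have "(al+1)/3 * B \<ge> 0" using Bnn al by simp
  ultimately have Ccnn: "Cc \<ge> 0" by simp
  have "lam^2 * B = lam * Cc" unfolding CcB lam_def by (simp add: power2_eq_square)
  with e3 have "A \<ge> lam * Cc" by (simp add: mult.commute)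
  with e1 have "I \<le> (al - lam) * Cc" by (simp add: algebra_simps)
  also have "\<dots> \<le> 0" using al Ccnn unfolding lam_def by (intro mult_nonpos_nonneg) auto
  finally have "I \<le> 0" .
  moreover have "integral {a..b} (\<lambda>x. p x powr (-al) * px x * pxxx x) = I"
    unfolding I_def by (rule integral_cong) (simp add: p0)
  ultimately show ?thesis by simp
qed
end

lemma quad_nonneg:
  fixes A B C X Y :: real
  assumes "A > 0" "B^2 \<le> 4*A*C"
  shows "A*X^2 + B*X*Y + C*Y^2 \<ge> 0"
proof -
  have "4*A*(A*X^2 + B*X*Y + C*Y^2) = (2*A*X+B*Y)^2 + (4*A*C - B^2)*Y^2"
    by (simp add: algebra_simps power2_eq_square)
  also have "\<dots> \<ge> 0" using assms by (intro add_nonneg_nonneg mult_nonneg_nonneg) auto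
  finally show ?thesis using assms(1) by (simp add: zero_le_mult_iff)
qed

lemma pow_le: fixes P n :: real assumes "P > 0" "1 \<le> n" "n \<le> 2"
  shows "P powr (4 - n) \<le> P^2 + P^3"
proof (cases "P \<le> 1")
  case True
  have "P powr (4-n) \<le> P powr 2" using True assms by (intro powr_mono') auto
  moreover have "P^3 \<ge> 0" using assms by simp
  moreover have "P powr 2 = P^2" using assms by (simp add: powr_numeral)
  ultimately show ?thesis by linarith
next
  case False
  have "P powr (4-n) \<le> P powr 3" using False assms by (intro powr_mono) auto
  moreover have "P^2 \<ge> 0" by simp
  moreover have "P powr 3 = P^3" using assms by (simp add: powr_numeral)
  ultimately show ?thesis by linarith
qed

lemma flux_pointwise:
  fixes P X Y eps chi n :: real
  assumes P: "P > 0" and eps: "eps > 0" and n: "1 \<le> n" "n \<le> 2"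
  shows "X * (- eps * (P ^ 4 / (P powr (4 - n) + eps)) * X
          - chi * (P powr (5 - n) / (P powr (4 - n) + eps)) * Y) \<le> chi\<^sup>2/(2*eps) * (1+P) * Y\<^sup>2"
proof -
  define ss where "ss = P powr (4-n)"
  define dd where "dd = ss + eps"
  have s0: "ss > 0" using P by (simp add: ss_def)
  have d0: "dd > 0" using s0 eps by (simp add: dd_def)
  have p5: "P powr (5-n) = P * ss"
  proof -
    have e: "5 - n = 1 + (4 - n)" by simp
    show ?thesis unfolding ss_def by (subst e, subst powr_add) (use P in simp)
  qed
  have sle: "ss \<le> P^2 + P^3" unfolding ss_def using pow_le P n by blast
  have key: "(chi * (P* ss/dd))^2 \<le> 4 * (eps * (P^4/dd)) * (chi\<^sup>2/(2*eps) * (1+P))"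
  proof -
    have "(chi * (P* ss/dd))^2 = chi^2 * P^2 * ss * (ss / dd^2)" by (simp add: power2_eq_square field_simps)
    also have "\<dots> \<le> chi^2 * P^2 * (P^2+P^3) * (1/dd)"
    proof (intro mult_mono)
      have "ss \<le> dd" unfolding dd_def using eps by simp
      then have "ss / dd \<le> 1" using d0 by simp
      then have "ss / dd * (1/dd) \<le> 1 * (1/dd)" using d0 by (intro mult_right_mono) auto
      then show "ss / dd^2 \<le> 1/dd" by (simp add: power2_eq_square)
    qed (use sle s0 d0 P in auto)
    also have "\<dots> \<le> 4 * (eps * (P^4/dd)) * (chi\<^sup>2/(2*eps) * (1+P))"
    proof -
      have eq: "4 * (eps * (P^4/dd)) * (chi\<^sup>2/(2*eps) * (1+P)) = 2*(chi^2 * P^2 * (P^2+P^3) * (1/dd))"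
        using eps d0 by (simp add: field_simps power2_eq_square power3_eq_cube power4_eq_xxxx)
      have "chi^2 * P^2 * (P^2+P^3) * (1/dd) \<ge> 0" using P d0 by simp
      then show ?thesis unfolding eq by linarith
    qed
    finally show ?thesis .
  qed
  have "0 \<le> (eps * (P^4/dd)) * X^2 + (chi * (P* ss/dd)) * X * Y + (chi\<^sup>2/(2*eps) * (1+P)) * Y^2"
    by (rule quad_nonneg) (use key eps d0 P in auto)
  then show ?thesis unfolding p5 dd_def[symmetric] ss_def[symmetric]
    by (simp add: algebra_simps power2_eq_square)
qed

lemma at_interior:
  assumes "\<forall>y\<in>{a..b}. (f has_real_derivative f' y) (at y within {a..b})" "x \<in> {a<..<b}"
  shows "(f has_real_derivative f' x) (at x)"
proof -
  have "x \<in> {a..b}" using assms(2) by auto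
  then have "(f has_real_derivative f' x) (at x within {a..b})" using assms(1) by blast
  then show ?thesis using at_within_Icc_at[of a x b] assms(2) by simp
qed

context ft begin

lemma flux_est:
  fixes eps al D chi n :: real and q qx pt R :: "real \<Rightarrow> real"
  assumes eps: "0 < eps" and al: "0 < al" "al \<le> 1/2" and n: "1 \<le> n" "n \<le> 2" and D: "0 < D"
    and cqx: "continuous_on {a..b} qx" and qxa: "qx a = 0" and qxb: "qx b = 0"
    and p3a: "pxxx a = 0" and p3b: "pxxx b = 0"
    and cpt: "continuous_on {a..b} pt" and cR: "continuous_on {a..b} R"
    and pde: "\<forall>x\<in>{a<..<b}. ((\<lambda>y. fluxU eps al D chi n (p y) (px y) (pxxx y) (qx y))
               has_real_derivative (pt x - R x)) (at x)"
  shows "- integral {a..b} (\<lambda>x. pxx x * pt x) \<le> - D * integral {a..b} (\<lambda>x. (pxx x)\<^sup>2)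
           + chi\<^sup>2/(2*eps) * integral {a..b} (\<lambda>x. (1 + p x) * (qx x)\<^sup>2)
           - integral {a..b} (\<lambda>x. pxx x * R x)"
proof -
  define F where "F y = fluxU eps al D chi n (p y) (px y) (pxxx y) (qx y)" for y
  have dpos: "0 < p x powr (4 - n) + eps" if "x \<in> {a..b}" for x
    using ppos[rule_format, OF that] eps by (simp add: add_pos_pos)
  have pne: "\<And>x. x \<in> {a..b} \<Longrightarrow> p x \<noteq> 0" using ppos by force
  have cpd: "continuous_on {a..b} (\<lambda>x. p x powr (4 - n) + eps)"
    by (intro continuous_intros cpow)
  have cF: "continuous_on {a..b} F"
    unfolding F_def fluxU_def
    apply (intro continuous_intros c0 c1 c2 c3 cqx cpow cpd)
    using dpos pne by (auto simp: less_imp_neq[symmetric])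
  have Fa: "F a = 0" and Fb: "F b = 0" unfolding F_def fluxU_def using bca bcb qxa qxb p3a p3b by simp_all
  have dP: "((\<lambda>x. pxx x * F x) has_vector_derivative (pxxx x * F x + pxx x * (pt x - R x))) (at x)"
    if x: "x \<in> {a<..<b}" for x
  proof -
    have "(pxx has_real_derivative pxxx x) (at x)"
      by (rule at_interior[OF d2 x])
    moreover have "(F has_real_derivative (pt x - R x)) (at x)" using pde x unfolding F_def by auto
    ultimately have "((\<lambda>x. pxx x * F x) has_real_derivative pxxx x * F x + pxx x * (pt x - R x)) (at x)"
      by (auto intro!: derivative_eq_intros)
    then show ?thesis by (simp add: has_real_derivative_iff_has_vector_derivative)
  qed
  have h: "((\<lambda>x. pxxx x * F x + pxx x * (pt x - R x)) has_integral (pxx b * F b - pxx a * F a)) {a..b}"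
    by (rule fundamental_theorem_of_calculus_interior[OF _ _ dP]) (use ab in \<open>auto intro!: continuous_intros c2 cF\<close>)
  then have h0: "integral {a..b} (\<lambda>x. pxxx x * F x + pxx x * (pt x - R x)) = 0"
    using Fa Fb by (simp add: integral_unique)
  have "integral {a..b} (\<lambda>x. pxxx x * F x + pxx x * (pt x - R x)) =
        integral {a..b} (\<lambda>x. pxxx x * F x) + integral {a..b} (\<lambda>x. pxx x * pt x) - integral {a..b} (\<lambda>x. pxx x * R x)"
    apply (simp add: ring_distribs)
    apply (subst integral_add integral_diff, (intro int_c continuous_intros c2 c3 cF cpt cR)+)+
    apply simp
    done
  with h0 have main: "- integral {a..b} (\<lambda>x. pxx x * pt x) = integral {a..b} (\<lambda>x. pxxx x * F x) - integral {a..b} (\<lambda>x. pxx x * R x)"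
    by linarith
  define e2 where "e2 = eps powr (al/2)"
  have e2pos: "e2 > 0" using eps by (simp add: e2_def)
  have pw: "pxxx x * F x \<le> e2 * (p x powr (-al) * px x * pxxx x) + D * (px x * pxxx x) + chi\<^sup>2/(2*eps) * ((1 + p x) * (qx x)\<^sup>2)"
    if x: "x \<in> {a..b}" for x
  proof -
    have "pxxx x * F x = pxxx x * (- eps * ((p x) ^ 4 / ((p x) powr (4 - n) + eps)) * pxxx x
          - chi * ((p x) powr (5 - n) / ((p x) powr (4 - n) + eps)) * qx x)
          + e2 * (p x powr (-al) * px x * pxxx x) + D * (px x * pxxx x)"
      unfolding F_def fluxU_def e2_def by (simp add: algebra_simps)
    also have "\<dots> \<le> chi\<^sup>2/(2*eps) * (1 + p x) * (qx x)\<^sup>2 + e2 * (p x powr (-al) * px x * pxxx x) + D * (px x * pxxx x)"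
      using flux_pointwise[OF ppos[rule_format, OF x] eps n, of "pxxx x" chi "qx x"] by linarith
    finally show ?thesis by (simp add: mult.assoc)
  qed
  have "integral {a..b} (\<lambda>x. pxxx x * F x) \<le> integral {a..b} (\<lambda>x. e2 * (p x powr (-al) * px x * pxxx x) + D * (px x * pxxx x) + chi\<^sup>2/(2*eps) * ((1 + p x) * (qx x)\<^sup>2))"
    by (rule integral_le[OF int_c int_c pw]) (assumption | intro continuous_intros c0 c1 c2 c3 cF cqx cpow)+
  also have "\<dots> = e2 * integral {a..b} (\<lambda>x. p x powr (-al) * px x * pxxx x) + D * integral {a..b} (\<lambda>x. px x * pxxx x)
       + chi\<^sup>2/(2*eps) * integral {a..b} (\<lambda>x. (1 + p x) * (qx x)\<^sup>2)"
  proof -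
    have i1: "(\<lambda>x. p x powr (-al) * px x * pxxx x) integrable_on {a..b}"
      by (intro int_c continuous_on_mult cpow c1 c3)
    have i2: "(\<lambda>x. px x * pxxx x) integrable_on {a..b}"
      by (intro int_c continuous_on_mult c1 c3)
    have i3: "(\<lambda>x. (1 + p x) * (qx x)\<^sup>2) integrable_on {a..b}"
      by (intro int_c continuous_intros c0 cqx)
    show ?thesis
      by (subst integral_add[OF integrable_add[OF integrable_on_mult_right[OF i1] integrable_on_mult_right[OF i2]]
          integrable_on_mult_right[OF i3]], subst integral_add[OF integrable_on_mult_right[OF i1] integrable_on_mult_right[OF i2]]) simp
  qed
  also have "\<dots> \<le> - D * integral {a..b} (\<lambda>x. (pxx x)\<^sup>2) + chi\<^sup>2/(2*eps) * integral {a..b} (\<lambda>x. (1 + p x) * (qx x)\<^sup>2)"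
    using alpha_term[OF al] e2pos px_pxxx by (simp add: mult_nonneg_nonpos)
  finally show ?thesis using main by linarith
qed
end


definition hh :: "real \<Rightarrow> real \<Rightarrow> real" where "hh eps P = 3*P^3/(3*P^2+eps)"
definition hdr :: "real \<Rightarrow> real \<Rightarrow> real" where "hdr eps P = (9*P^4+9*eps*P^2)/(3*P^2+eps)^2"

lemma hh_bounds: assumes "P > 0" "eps > 0" shows "0 \<le> hh eps P" "hh eps P \<le> P"
proof -
  have d: "3*P^2+eps > 0" using assms by (simp add: add_pos_pos)
  show "0 \<le> hh eps P" using assms d unfolding hh_def by simp
  have "3*P^3 \<le> P * (3*P^2+eps)" using assms by (simp add: algebra_simps power3_eq_cube power2_eq_square)
  then show "hh eps P \<le> P" using d unfolding hh_def by (simp add: divide_le_eq)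
qed

lemma hdr_bounds: assumes "P > 0" "eps > 0" shows "0 \<le> hdr eps P" "hdr eps P \<le> 3"
proof -
  have d: "3*P^2+eps > 0" using assms by (simp add: add_pos_pos)
  show "0 \<le> hdr eps P" using assms d unfolding hdr_def by simp
  have "9*P^4+9*eps*P^2 \<le> 3 * (3*P^2+eps)^2" using assms
    by (simp add: algebra_simps power2_eq_square power4_eq_xxxx)
  then show "hdr eps P \<le> 3" using d unfolding hdr_def by (simp add: divide_le_eq)
qed

lemma hh_deriv:
  assumes "eps > 0" "(f has_real_derivative f') (at x within S)"
  shows "((\<lambda>y. hh eps (f y)) has_real_derivative hdr eps (f x) * f') (at x within S)"
proof -
  have d: "3*(f x)^2+eps > 0" using assms by (simp add: add_nonneg_pos)
  show ?thesis unfolding hh_def hdr_def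
    using assms d
    apply (auto intro!: derivative_eq_intros)
    apply (simp add: field_simps power2_eq_square power4_eq_xxxx power3_eq_cube)
    done
qed

lemma reacU_eq: "reacU eps lam aa P Q = hh eps P * (lam - P + aa * Q)"
  unfolding reacU_def hh_def by simp
lemma reacV_eq: "reacV eps lam aa Q P = hh eps P * (lam - P - aa * Q)"
  unfolding reacV_def hh_def by simp

lemma reacU_pw:
  assumes "P > 0" "Q > 0" "eps > 0" "lam > 0" "aa > 0"
  shows "X * (hdr eps P * X * (lam - P + aa * Q) + hh eps P * (- X + aa * Y))
     \<le> 3 * (lam + aa * Q) * X\<^sup>2 + aa * P * \<bar>X\<bar> * \<bar>Y\<bar>"
proof -
  note h = hh_bounds[OF assms(1,3)] and hdr = hdr_bounds[OF assms(1,3)]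
  have 1: "hdr eps P * X\<^sup>2 * (lam - P + aa * Q) \<le> 3 * (lam + aa * Q) * X\<^sup>2"
  proof -
    have "hdr eps P * X\<^sup>2 * (lam - P + aa * Q) \<le> hdr eps P * X\<^sup>2 * (lam + aa * Q)"
      using assms hdr by (intro mult_left_mono) auto
    also have "\<dots> \<le> 3 * X\<^sup>2 * (lam + aa * Q)"
      using assms hdr by (intro mult_right_mono) auto
    finally show ?thesis by (simp add: algebra_simps)
  qed
  have 2: "- hh eps P * X\<^sup>2 \<le> 0" using h by simp
  have 3: "hh eps P * aa * (X * Y) \<le> aa * P * \<bar>X\<bar> * \<bar>Y\<bar>"
  proof -
    have "hh eps P * aa * (X * Y) \<le> hh eps P * aa * (\<bar>X\<bar> * \<bar>Y\<bar>)"
      using h assms by (intro mult_left_mono) (auto simp: abs_mult[symmetric])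
    also have "\<dots> \<le> P * aa * (\<bar>X\<bar> * \<bar>Y\<bar>)" using h assms by (intro mult_right_mono) auto
    finally show ?thesis by (simp add: algebra_simps)
  qed
  have "X * (hdr eps P * X * (lam - P + aa * Q) + hh eps P * (- X + aa * Y)) =
     hdr eps P * X\<^sup>2 * (lam - P + aa * Q) + (- hh eps P * X\<^sup>2) + hh eps P * aa * (X * Y)"
    by (simp add: algebra_simps power2_eq_square)
  then show ?thesis using 1 2 3 by linarith
qed

lemma reacV_pw:
  assumes "P > 0" "Q > 0" "eps > 0" "lam > 0" "aa > 0"
  shows "X * (hdr eps P * X * (lam - P - aa * Q) + hh eps P * (- X - aa * Y))
     \<le> 3 * lam * X\<^sup>2 + aa * P * \<bar>X\<bar> * \<bar>Y\<bar>"
proof -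
  note h = hh_bounds[OF assms(1,3)] and hdr = hdr_bounds[OF assms(1,3)]
  have 1: "hdr eps P * X\<^sup>2 * (lam - P - aa * Q) \<le> 3 * lam * X\<^sup>2"
  proof -
    have "aa * Q > 0" using assms by simp
    then have "lam - P - aa * Q \<le> lam" using assms by linarith
    then have "hdr eps P * X\<^sup>2 * (lam - P - aa * Q) \<le> hdr eps P * X\<^sup>2 * lam"
      using assms hdr by (intro mult_left_mono) auto
    also have "\<dots> \<le> 3 * X\<^sup>2 * lam"
      using assms hdr by (intro mult_right_mono) auto
    finally show ?thesis by (simp add: algebra_simps)
  qed
  have 2: "- hh eps P * X\<^sup>2 \<le> 0" using h by simp
  have 3: "- hh eps P * aa * (X * Y) \<le> aa * P * \<bar>X\<bar> * \<bar>Y\<bar>"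
  proof -
    have "- hh eps P * aa * (X * Y) \<le> hh eps P * aa * (\<bar>X\<bar> * \<bar>Y\<bar>)"
    proof -
      have "hh eps P * aa * (- (X * Y)) \<le> hh eps P * aa * \<bar>X * Y\<bar>"
        using h assms by (intro mult_left_mono) auto
      then show ?thesis by (simp add: abs_mult)
    qed
    also have "\<dots> \<le> P * aa * (\<bar>X\<bar> * \<bar>Y\<bar>)" using h assms by (intro mult_right_mono) auto
    finally show ?thesis by (simp add: algebra_simps)
  qed
  have "X * (hdr eps P * X * (lam - P - aa * Q) + hh eps P * (- X - aa * Y)) =
     hdr eps P * X\<^sup>2 * (lam - P - aa * Q) + (- hh eps P * X\<^sup>2) + (- hh eps P * aa * (X * Y))"
    by (simp add: algebra_simps power2_eq_square)
  then show ?thesis using 1 2 3 by linarith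
qed

context ft begin
lemma reac_ibp:
  assumes "\<forall>x\<in>{a..b}. (R has_real_derivative Rx x) (at x within {a..b})"
    and "continuous_on {a..b} Rx"
  shows "- integral {a..b} (\<lambda>x. pxx x * R x) = integral {a..b} (\<lambda>x. px x * Rx x)"
proof -
  have cR: "continuous_on {a..b} R" using assms(1) deriv_cont_on by blast
  have "((\<lambda>x. pxx x * R x + px x * Rx x) has_integral 0) {a..b}"
    apply (rule ibp_zero[where P="\<lambda>x. px x * R x"])
    using ab bca bcb d1 assms(1) by (auto intro!: derivative_eq_intros)
  then have "integral {a..b} (\<lambda>x. pxx x * R x + px x * Rx x) = 0" by (rule integral_unique)
  moreover have "integral {a..b} (\<lambda>x. pxx x * R x + px x * Rx x) =
    integral {a..b} (\<lambda>x. pxx x * R x) + integral {a..b} (\<lambda>x. px x * Rx x)"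
    by (intro integral_add int_c continuous_intros c1 c2 cR assms(2))
  ultimately show ?thesis by linarith
qed
end


lemma fluxV_eq: "fluxV eps al D chi n w wx wxxx zx = fluxU eps al D (-chi) n w wx wxxx zx"
  unfolding fluxV_def fluxU_def by simp

context ft begin

lemma sup_bound:
  assumes x: "x \<in> {a..b}"
  shows "(px x)\<^sup>2 \<le> integral {a..b} (\<lambda>y. 2 * \<bar>px y * pxx y\<bar>)"
proof -
  have sub: "{a..x} \<subseteq> {a..b}" using x by auto
  have dd: "((\<lambda>y. (px y)\<^sup>2) has_vector_derivative 2 * px y * pxx y) (at y within {a..x})"
    if y: "y \<in> {a..x}" for y
  proof -
    have "(px has_real_derivative pxx y) (at y within {a..b})" using d1 y sub by blast
    then have "(px has_real_derivative pxx y) (at y within {a..x})"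
      using sub by (rule DERIV_subset)
    then have "((\<lambda>y. (px y)\<^sup>2) has_real_derivative 2 * px y * pxx y) (at y within {a..x})"
      by (auto intro!: derivative_eq_intros)
    then show ?thesis by (simp add: has_real_derivative_iff_has_vector_derivative)
  qed
  have "((\<lambda>y. 2 * px y * pxx y) has_integral ((px x)\<^sup>2 - (px a)\<^sup>2)) {a..x}"
    by (rule fundamental_theorem_of_calculus[OF _ dd]) (use x in auto)
  then have "(px x)\<^sup>2 = integral {a..x} (\<lambda>y. 2 * px y * pxx y)" using bca by (simp add: integral_unique)
  also have "\<dots> \<le> integral {a..x} (\<lambda>y. 2 * \<bar>px y * pxx y\<bar>)"
    by (rule integral_le) (auto intro!: integrable_continuous_interval continuous_intros
        continuous_on_subset[OF c1 sub] continuous_on_subset[OF c2 sub] simp: abs_mult[symmetric])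
  also have "\<dots> \<le> integral {a..b} (\<lambda>y. 2 * \<bar>px y * pxx y\<bar>)"
    by (rule integral_subset_le[OF sub]) (auto intro!: integrable_continuous_interval continuous_intros
        continuous_on_subset[OF c1 sub] continuous_on_subset[OF c2 sub] c1 c2)
  finally show ?thesis .
qed

lemma young_S:
  assumes "dl > 0"
  shows "integral {a..b} (\<lambda>y. 2 * \<bar>px y * pxx y\<bar>) \<le> dl * integral {a..b} (\<lambda>y. (pxx y)\<^sup>2) + (1/dl) * integral {a..b} (\<lambda>y. (px y)\<^sup>2)"
proof -
  have pw: "2 * \<bar>X * Y\<bar> \<le> dl * Y\<^sup>2 + (1/dl) * X\<^sup>2" for X Y :: real
  proof -
    have "0 \<le> (dl * \<bar>Y\<bar> - \<bar>X\<bar>)\<^sup>2 / dl" using assms by simp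
    also have "(dl * \<bar>Y\<bar> - \<bar>X\<bar>)\<^sup>2 / dl = dl * Y\<^sup>2 + (1/dl) * X\<^sup>2 - 2 * \<bar>X * Y\<bar>"
      using assms by (simp add: field_simps power2_eq_square abs_mult)
    finally show ?thesis by simp
  qed
  have "integral {a..b} (\<lambda>y. 2 * \<bar>px y * pxx y\<bar>) \<le> integral {a..b} (\<lambda>y. dl * (pxx y)\<^sup>2 + (1/dl) * (px y)\<^sup>2)"
    by (rule integral_le[OF int_c int_c pw]) (intro continuous_intros c1 c2)+
  also have "\<dots> = dl * integral {a..b} (\<lambda>y. (pxx y)\<^sup>2) + (1/dl) * integral {a..b} (\<lambda>y. (px y)\<^sup>2)"
    by (subst integral_add, (intro int_c continuous_intros c1 c2)+) simp
  finally show ?thesis .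
qed

lemma S_nonneg: "0 \<le> integral {a..b} (\<lambda>y. 2 * \<bar>px y * pxx y\<bar>)"
  by (rule integral_nonneg) (auto intro!: int_c continuous_intros c1 c2)

end

lemma weighted:
  fixes w z :: "real \<Rightarrow> real"
  assumes "continuous_on {a..b} w" "continuous_on {a..b} z" "\<forall>x\<in>{a..b}. 0 \<le> w x" "\<forall>x\<in>{a..b}. z x \<le> S"
  shows "integral {a..b} (\<lambda>x. w x * z x) \<le> S * integral {a..b} w"
proof -
  have "integral {a..b} (\<lambda>x. w x * z x) \<le> integral {a..b} (\<lambda>x. S * w x)"
  proof (rule integral_le)
    fix x assume x: "x \<in> {a..b}"
    have "w x * z x \<le> w x * S" using assms(3,4) x by (intro mult_left_mono) auto
    then show "w x * z x \<le> S * w x" by (simp add: mult.commute)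
  qed (use assms in \<open>auto intro!: integrable_continuous_interval continuous_intros\<close>)
  also have "\<dots> = S * integral {a..b} w" by simp
  finally show ?thesis .
qed


lemma mvt_between:
  fixes f f' :: "real \<Rightarrow> real"
  assumes "s \<noteq> t" "\<And>z. \<bar>z - t\<bar> \<le> \<bar>s - t\<bar> \<Longrightarrow> (f has_real_derivative f' z) (at z)"
  shows "\<exists>z. \<bar>z - t\<bar> < \<bar>s - t\<bar> \<and> (f s - f t) / (s - t) = f' z"
proof (cases "t < s")
  case True
  have "\<exists>z>t. z < s \<and> f s - f t = (s - t) * f' z"
    by (rule MVT2[OF True]) (use True in \<open>auto intro!: assms(2)\<close>)
  then obtain z where "t < z" "z < s" "f s - f t = (s - t) * f' z" by blast
  then show ?thesis using True by (intro exI[of _ z]) auto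
next
  case False
  then have st: "s < t" using assms(1) by simp
  have "\<exists>z>s. z < t \<and> f t - f s = (t - s) * f' z"
    by (rule MVT2[OF st]) (use st in \<open>auto intro!: assms(2)\<close>)
  then obtain z where "s < z" "z < t" "f t - f s = (t - s) * f' z" by blast
  then have "(f s - f t) / (s - t) = f' z" using st by (simp add: field_simps)
  then show ?thesis using st \<open>s < z\<close> \<open>z < t\<close> by (intro exI[of _ z]) auto
qed

lemma cont_slice:
  fixes f :: "real \<Rightarrow> real \<Rightarrow> real"
  assumes "continuous_on (A \<times> S) (\<lambda>(x,s). f x s)" "s \<in> S"
  shows "continuous_on A (\<lambda>x. f x s)"
proof -
  have "continuous_on A ((\<lambda>(x,s). f x s) \<circ> (\<lambda>x. (x, s)))"
    by (rule continuous_on_compose) (auto intro!: continuous_intros continuous_on_subset[OF assms(1)] simp: assms(2))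
  then show ?thesis by (simp add: o_def)
qed

lemma deriv_energy:
  fixes w wx wxx wt :: "real \<Rightarrow> real \<Rightarrow> real"
  assumes ab: "a < b" and S: "open S" "t \<in> S"
    and dx: "\<forall>s\<in>S. \<forall>x\<in>{a..b}. ((\<lambda>y. w y s) has_real_derivative wx x s) (at x within {a..b})"
    and dxx: "\<forall>s\<in>S. \<forall>x\<in>{a..b}. ((\<lambda>y. wx y s) has_real_derivative wxx x s) (at x within {a..b})"
    and dt: "\<forall>s\<in>S. \<forall>x\<in>{a..b}. ((\<lambda>s. w x s) has_real_derivative wt x s) (at s)"
    and cxx: "continuous_on ({a..b} \<times> S) (\<lambda>(x,s). wxx x s)"
    and ct: "continuous_on ({a..b} \<times> S) (\<lambda>(x,s). wt x s)"
    and bc: "\<forall>s\<in>S. wx a s = 0 \<and> wx b s = 0"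
  shows "((\<lambda>s. integral {a..b} (\<lambda>x. (wx x s)\<^sup>2)) has_real_derivative
           (-2 * integral {a..b} (\<lambda>x. wxx x t * wt x t))) (at t)"
proof -
  define I where "I s = integral {a..b} (\<lambda>x. (wx x s)\<^sup>2)" for s
  have cw: "continuous_on {a..b} (\<lambda>x. w x s)" if "s \<in> S" for s
    using dx that by (metis DERIV_continuous continuous_on_eq_continuous_within)
  have cwx: "continuous_on {a..b} (\<lambda>x. wx x s)" if "s \<in> S" for s
    using dxx that by (metis DERIV_continuous continuous_on_eq_continuous_within)
  have cwxx: "continuous_on {a..b} (\<lambda>x. wxx x s)" if "s \<in> S" for s
    by (rule cont_slice[OF cxx that])
  have cwt: "continuous_on {a..b} (\<lambda>x. wt x s)" if "s \<in> S" for s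
    by (rule cont_slice[OF ct that])
  have ident: "I s - I t = - integral {a..b} (\<lambda>x. (w x s - w x t) * (wxx x s + wxx x t))"
    if s: "s \<in> S" for s
  proof -
    have "((\<lambda>x. (wx x s - wx x t) * (wx x s + wx x t) + (w x s - w x t) * (wxx x s + wxx x t)) has_integral
         ((w b s - w b t) * (wx b s + wx b t) - (w a s - w a t) * (wx a s + wx a t))) {a..b}"
    proof (rule fundamental_theorem_of_calculus)
      show "a \<le> b" using ab by simp
    next
      fix x assume x: "x \<in> {a..b}"
      have d1: "((\<lambda>y. w y s) has_real_derivative wx x s) (at x within {a..b})" using dx s x by blast
      have d2: "((\<lambda>y. w y t) has_real_derivative wx x t) (at x within {a..b})" using dx S x by blast
      have d3: "((\<lambda>y. wx y s) has_real_derivative wxx x s) (at x within {a..b})" using dxx s x by blast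
      have d4: "((\<lambda>y. wx y t) has_real_derivative wxx x t) (at x within {a..b})" using dxx S x by blast
      show "((\<lambda>x. (w x s - w x t) * (wx x s + wx x t)) has_vector_derivative
         (wx x s - wx x t) * (wx x s + wx x t) + (w x s - w x t) * (wxx x s + wxx x t)) (at x within {a..b})"
        unfolding has_real_derivative_iff_has_vector_derivative[symmetric]
        using d1 d2 d3 d4 by (auto intro!: derivative_eq_intros)
    qed
    moreover have "(w b s - w b t) * (wx b s + wx b t) - (w a s - w a t) * (wx a s + wx a t) = 0"
      using bc s S by simp
    ultimately have "integral {a..b} (\<lambda>x. (wx x s - wx x t) * (wx x s + wx x t) + (w x s - w x t) * (wxx x s + wxx x t)) = 0"
      by (simp add: integral_unique)
    moreover have "integral {a..b} (\<lambda>x. (wx x s - wx x t) * (wx x s + wx x t) + (w x s - w x t) * (wxx x s + wxx x t))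
       = (I s - I t) + integral {a..b} (\<lambda>x. (w x s - w x t) * (wxx x s + wxx x t))"
    proof -
      have "integral {a..b} (\<lambda>x. (wx x s - wx x t) * (wx x s + wx x t) + (w x s - w x t) * (wxx x s + wxx x t))
         = integral {a..b} (\<lambda>x. (wx x s - wx x t) * (wx x s + wx x t)) + integral {a..b} (\<lambda>x. (w x s - w x t) * (wxx x s + wxx x t))"
        by (intro integral_add integrable_continuous_interval continuous_intros cw cwx cwxx s S)
      moreover have "integral {a..b} (\<lambda>x. (wx x s - wx x t) * (wx x s + wx x t)) = I s - I t"
      proof -
        have "integral {a..b} (\<lambda>x. (wx x s - wx x t) * (wx x s + wx x t)) = integral {a..b} (\<lambda>x. (wx x s)\<^sup>2 - (wx x t)\<^sup>2)"
          by (simp add: algebra_simps power2_eq_square)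
        also have "\<dots> = I s - I t" unfolding I_def
          by (intro integral_diff integrable_continuous_interval continuous_intros cwx s S)
        finally show ?thesis .
      qed
      ultimately show ?thesis by simp
    qed
    ultimately show ?thesis by linarith
  qed
  obtain d0 where d0: "d0 > 0" "cball t d0 \<subseteq> S" using S open_contains_cball by blast
  define K where "K = {a..b} \<times> cball t d0"
  have Kc: "compact K" unfolding K_def by (intro compact_Times compact_Icc compact_cball)
  have KS: "K \<subseteq> {a..b} \<times> S" unfolding K_def using d0 by auto
  have cK1: "continuous_on K (\<lambda>(x,s). wxx x s)" by (rule continuous_on_subset[OF cxx KS])
  have cK2: "continuous_on K (\<lambda>(x,s). wt x s)" by (rule continuous_on_subset[OF ct KS])
  have uc1: "uniformly_continuous_on K (\<lambda>(x,s). wxx x s)" by (rule compact_uniformly_continuous[OF cK1 Kc])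
  have uc2: "uniformly_continuous_on K (\<lambda>(x,s). wt x s)" by (rule compact_uniformly_continuous[OF cK2 Kc])
  obtain M1 where M1: "\<forall>y\<in>(\<lambda>(x,s). wxx x s) ` K. norm y \<le> M1"
    using compact_imp_bounded[OF compact_continuous_image[OF cK1 Kc]] bounded_iff by blast
  obtain M2 where M2: "\<forall>y\<in>(\<lambda>(x,s). wt x s) ` K. norm y \<le> M2"
    using compact_imp_bounded[OF compact_continuous_image[OF cK2 Kc]] bounded_iff by blast
  define M where "M = max 0 (max M1 M2)"
  have M0: "M \<ge> 0" unfolding M_def by simp
  have bxx: "\<bar>wxx x s\<bar> \<le> M" if "x \<in> {a..b}" "s \<in> cball t d0" for x s
    using M1 that unfolding M_def K_def by force
  have bt: "\<bar>wt x s\<bar> \<le> M" if "x \<in> {a..b}" "s \<in> cball t d0" for x s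
    using M2 that unfolding M_def K_def by force
  have tcb: "t \<in> cball t d0" using d0 by simp
  define Dv where "Dv = -2 * integral {a..b} (\<lambda>x. wxx x t * wt x t)"
  have lim: "((\<lambda>s. (I s - I t) / (s - t)) \<longlongrightarrow> Dv) (at t)"
  proof (rule tendstoI)
    fix e :: real assume e: "e > 0"
    define eta where "eta = min 1 (e / (2 * (3 * M + 1) * (b - a)))"
    have eta0: "eta > 0" unfolding eta_def using e ab M0 by (simp add: add_nonneg_pos)
    have etab: "3 * M * eta * (b - a) < e"
    proof -
      have "eta \<le> e / (2 * (3 * M + 1) * (b - a))" unfolding eta_def by simp
      then have "eta * (2 * (3 * M + 1) * (b - a)) \<le> e"
        using ab M0 by (simp add: le_divide_eq add_nonneg_pos)
      moreover have "3 * M * eta * (b - a) < eta * (2 * (3 * M + 1) * (b - a))"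
      proof -
        have "eta * (2 * (3 * M + 1) * (b - a)) - 3 * M * eta * (b - a) = eta * (b - a) * (3 * M + 2)"
          by (simp add: algebra_simps)
        moreover have "eta * (b - a) * (3 * M + 2) > 0" using ab M0 eta0 by (intro mult_pos_pos) auto
        ultimately show ?thesis by linarith
      qed
      ultimately show ?thesis by linarith
    qed
    obtain e1 where e1: "e1 > 0" "\<forall>p\<in>K. \<forall>p'\<in>K. dist p' p < e1 \<longrightarrow> dist ((\<lambda>(x,s). wxx x s) p') ((\<lambda>(x,s). wxx x s) p) < eta"
      using uc1 eta0 unfolding uniformly_continuous_on_def by blast
    obtain e2 where e2: "e2 > 0" "\<forall>p\<in>K. \<forall>p'\<in>K. dist p' p < e2 \<longrightarrow> dist ((\<lambda>(x,s). wt x s) p') ((\<lambda>(x,s). wt x s) p) < eta"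
      using uc2 eta0 unfolding uniformly_continuous_on_def by blast
    define dd where "dd = min d0 (min e1 e2)"
    have dd0: "dd > 0" unfolding dd_def using d0 e1 e2 by simp
    show "\<forall>\<^sub>F s in at t. dist ((I s - I t) / (s - t)) Dv < e"
      unfolding eventually_at
    proof (intro exI[of _ dd] conjI ballI impI allI dd0)
      fix s assume s: "s \<noteq> t \<and> dist s t < dd"
      have st: "s \<noteq> t" "\<bar>s - t\<bar> < dd" using s by (auto simp: dist_real_def)
      have scb: "s \<in> cball t d0" using st unfolding dd_def by (simp add: dist_real_def abs_minus_commute)
      have sS: "s \<in> S" using scb d0 by auto
      define q where "q x = (w x s - w x t) / (s - t)" for x
      have Aclose: "\<bar>wxx x s - wxx x t\<bar> < eta" if x: "x \<in> {a..b}" for x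
      proof -
        have "dist (x, s) (x, t) < e1" using st unfolding dd_def by (simp add: dist_Pair_Pair dist_real_def)
        moreover have "(x, s) \<in> K" "(x, t) \<in> K" unfolding K_def using x scb tcb by auto
        ultimately show ?thesis using e1(2) by (force simp: dist_real_def)
      qed
      have qclose: "\<bar>q x - wt x t\<bar> < eta" if x: "x \<in> {a..b}" for x
      proof -
        have "\<exists>z. \<bar>z - t\<bar> < \<bar>s - t\<bar> \<and> (w x s - w x t) / (s - t) = wt x z"
        proof (rule mvt_between[OF st(1)])
          fix z assume z: "\<bar>z - t\<bar> \<le> \<bar>s - t\<bar>"
          have "z \<in> S" using z scb d0 by (auto simp: dist_real_def)
          then show "((\<lambda>s. w x s) has_real_derivative wt x z) (at z)" using dt x by blast
        qed
        then obtain z where z: "\<bar>z - t\<bar> < \<bar>s - t\<bar>" "q x = wt x z" unfolding q_def by blast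
        have zcb: "z \<in> cball t d0" using z st unfolding dd_def by (simp add: dist_real_def abs_minus_commute)
        have "dist (x, z) (x, t) < e2" using z st unfolding dd_def by (simp add: dist_Pair_Pair dist_real_def)
        moreover have "(x, z) \<in> K" "(x, t) \<in> K" unfolding K_def using x zcb tcb by auto
        ultimately show ?thesis using e2(2) z(2) by (force simp: dist_real_def)
      qed
      have pw: "\<bar>q x * (wxx x s + wxx x t) - 2 * (wxx x t * wt x t)\<bar> \<le> 3 * M * eta" if x: "x \<in> {a..b}" for x
      proof -
        have "q x * (wxx x s + wxx x t) - 2 * (wxx x t * wt x t) =
              (q x - wt x t) * (wxx x s + wxx x t) + wt x t * (wxx x s - wxx x t)"
          by (simp add: algebra_simps)
        also have "\<bar>\<dots>\<bar> \<le> \<bar>q x - wt x t\<bar> * \<bar>wxx x s + wxx x t\<bar> + \<bar>wt x t\<bar> * \<bar>wxx x s - wxx x t\<bar>"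
          by (simp add: abs_mult[symmetric] abs_triangle_ineq)
        also have "\<dots> \<le> eta * (2 * M) + M * eta"
        proof (intro add_mono mult_mono)
          show "\<bar>q x - wt x t\<bar> \<le> eta" using qclose[OF x] by simp
          show "\<bar>wxx x s + wxx x t\<bar> \<le> 2 * M"
            using bxx[OF x scb] bxx[OF x tcb] by linarith
          show "\<bar>wt x t\<bar> \<le> M" using bt[OF x tcb] .
          show "\<bar>wxx x s - wxx x t\<bar> \<le> eta" using Aclose[OF x] by simp
        qed (use M0 eta0 in auto)
        finally show ?thesis by (simp add: algebra_simps)
      qed
      have cq: "continuous_on {a..b} q" unfolding q_def
        by (intro continuous_intros cw sS S) (use st in auto)
      have quot: "(I s - I t) / (s - t) = - integral {a..b} (\<lambda>x. q x * (wxx x s + wxx x t))"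
      proof -
        have "(I s - I t) / (s - t) = - (integral {a..b} (\<lambda>x. (w x s - w x t) * (wxx x s + wxx x t)) / (s - t))"
          using ident[OF sS] by simp
        also have "\<dots> = - integral {a..b} (\<lambda>x. (w x s - w x t) * (wxx x s + wxx x t) / (s - t))"
          by (simp add: integral_divide)
        also have "\<dots> = - integral {a..b} (\<lambda>x. q x * (wxx x s + wxx x t))"
          unfolding q_def by (simp add: field_simps)
        finally show ?thesis .
      qed
      have "dist ((I s - I t) / (s - t)) Dv =
          \<bar>integral {a..b} (\<lambda>x. q x * (wxx x s + wxx x t)) - integral {a..b} (\<lambda>x. 2 * (wxx x t * wt x t))\<bar>"
        unfolding quot Dv_def dist_real_def by (simp add: abs_minus_commute)
      also have "\<dots> = \<bar>integral {a..b} (\<lambda>x. q x * (wxx x s + wxx x t) - 2 * (wxx x t * wt x t))\<bar>"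
        by (subst integral_diff) (rule refl | intro integrable_continuous_interval continuous_intros cq cwxx cwt sS S)+
      also have "\<dots> \<le> 3 * M * eta * (b - a)"
        using integral_bound[of a b "\<lambda>x. q x * (wxx x s + wxx x t) - 2 * (wxx x t * wt x t)" "3 * M * eta",
           OF _ continuous_on_diff[OF continuous_on_mult[OF cq continuous_on_add[OF cwxx[OF sS] cwxx[OF S(2)]]]
             continuous_on_mult[OF continuous_on_const continuous_on_mult[OF cwxx[OF S(2)] cwt[OF S(2)]]]]] ab pw
        by simp
      also have "\<dots> < e" by (rule etab)
      finally show "dist ((I s - I t) / (s - t)) Dv < e" .
    qed
  qed
  then show ?thesis unfolding I_def[symmetric] Dv_def[symmetric]
    by (simp add: has_field_derivative_iff)
qed


lemma gronwall:
  fixes f f' :: "real \<Rightarrow> real"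
  assumes t1: "0 \<le> t1" and c: "continuous_on {0..t1} f"
    and d: "\<And>s. 0 < s \<Longrightarrow> s < t1 \<Longrightarrow> (f has_real_derivative f' s) (at s) \<and> f' s \<le> K * f s"
  shows "f t1 \<le> f 0 * exp (K * t1)"
proof -
  define g where "g s = f s * exp (- K * s)" for s
  have "g t1 \<le> g 0"
  proof (rule DERIV_nonpos_imp_decreasing_open[OF t1])
    fix s assume s: "0 < s" "s < t1"
    have "(g has_real_derivative f' s * exp (- K * s) + f s * (exp (- K * s) * (- K))) (at s)"
      unfolding g_def using d[OF s] by (auto intro!: derivative_eq_intros)
    moreover have "f' s * exp (- K * s) + f s * (exp (- K * s) * (- K)) \<le> 0"
    proof -
      have "f' s * exp (- K * s) \<le> K * f s * exp (- K * s)" using d[OF s] by (intro mult_right_mono) auto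
      then show ?thesis by (simp add: algebra_simps)
    qed
    ultimately show "\<exists>y. (g has_real_derivative y) (at s) \<and> y \<le> 0" by blast
  next
    show "continuous_on {0..t1} g" unfolding g_def by (intro continuous_intros c)
  qed
  then have "f t1 * exp (- K * t1) \<le> f 0" unfolding g_def by simp
  then have "f t1 * exp (- K * t1) * exp (K * t1) \<le> f 0 * exp (K * t1)" by (intro mult_right_mono) auto
  then show ?thesis by (simp add: exp_minus field_simps)
qed

lemma Y_pw:
  assumes P: "P > 0" and Q: "Q > 0" and eps: "0 < eps" "eps < 1" and pos: "lam1 > 0" "lam2 > 0" "a1 > 0" "a2 > 0"
  shows "hh eps P * (lam1 - P + a1 * Q) + (a1/a2) * (hh eps Q * (lam2 - Q - a2 * P))
      \<le> (lam1 + a1 + lam2) * (P + (a1/a2) * Q)"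
proof -
  note hP = hh_bounds[OF P eps(1)] and hQ = hh_bounds[OF Q eps(1)]
  have QmhQ: "Q - hh eps Q \<le> 1"
  proof -
    have d: "3*Q^2+eps > 0" using Q eps by (simp add: add_pos_pos)
    have "Q - hh eps Q = Q * eps / (3*Q^2+eps)" unfolding hh_def using d
      by (simp add: field_simps power2_eq_square power3_eq_cube)
    also have "\<dots> \<le> 1"
    proof -
      have "Q * eps \<le> 3*Q^2+eps"
      proof (cases "Q \<le> 1")
        case True then have "Q * eps \<le> 1 * eps" using eps by (intro mult_right_mono) auto
        moreover have "0 \<le> 3*Q^2" by simp
        ultimately show ?thesis by linarith
      next
        case False then have "Q * eps \<le> Q * 1" using eps Q by (intro mult_left_mono) auto
        also have "\<dots> \<le> Q * Q" using False Q by (intro mult_left_mono) auto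
        finally have "Q * eps \<le> Q * Q" .
        moreover have "0 \<le> Q * Q" by simp
        ultimately show ?thesis using eps unfolding power2_eq_square by linarith
      qed
      then show ?thesis using d by simp
    qed
    finally show ?thesis .
  qed
  have t1: "hh eps P * lam1 \<le> P * lam1" using hP pos by (intro mult_right_mono) auto
  have t2: "hh eps P * P \<ge> 0" using hP P by simp
  have t3: "hh eps P * (a1 * Q) \<le> P * (a1 * Q)" using hP pos Q by (intro mult_right_mono) auto
  have t4: "(a1/a2) * (hh eps Q * lam2) \<le> (a1/a2) * (Q * lam2)" using hQ pos by (intro mult_left_mono mult_right_mono) auto
  have t5: "(a1/a2) * (hh eps Q * Q) \<ge> 0" using hQ pos Q by simp
  have t6: "(a1/a2) * (hh eps Q * (a2 * P)) = a1 * P * hh eps Q" using pos by simp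
  have t7: "a1 * P * (Q - hh eps Q) \<le> a1 * P * 1" using QmhQ pos P by (intro mult_left_mono) auto
  have "hh eps P * (lam1 - P + a1 * Q) + (a1/a2) * (hh eps Q * (lam2 - Q - a2 * P)) =
        hh eps P * lam1 - hh eps P * P + hh eps P * (a1 * Q) + (a1/a2) * (hh eps Q * lam2)
        - (a1/a2) * (hh eps Q * Q) - (a1/a2) * (hh eps Q * (a2 * P))"
    by (simp add: algebra_simps)
  also have "\<dots> \<le> P * lam1 + P * (a1 * Q) + (a1/a2) * (Q * lam2) - a1 * P * hh eps Q"
    using t1 t2 t3 t4 t5 t6 by linarith
  also have "\<dots> = P * lam1 + a1 * P * (Q - hh eps Q) + (a1/a2) * (Q * lam2)" by (simp add: algebra_simps)
  also have "\<dots> \<le> P * lam1 + a1 * P + (a1/a2) * (Q * lam2)" using t7 by simp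
  also have "\<dots> \<le> (lam1 + a1 + lam2) * (P + (a1/a2) * Q)"
  proof -
    have "0 \<le> lam2 * P" "0 \<le> (lam1 + a1) * ((a1/a2) * Q)" using pos P Q by auto
    moreover have "(lam1 + a1 + lam2) * (P + (a1/a2)*Q) = P*lam1 + a1*P + (a1/a2)*(Q*lam2) + (lam2*P + (lam1+a1)*((a1/a2)*Q))"
      by (simp add: algebra_simps add_divide_distrib)
    ultimately show ?thesis by linarith
  qed
  finally show ?thesis .
qed

lemma linf_bound:
  fixes f f' :: "real \<Rightarrow> real"
  assumes ab: "a < b" and d: "\<forall>x\<in>{a..b}. (f has_real_derivative f' x) (at x within {a..b})"
    and c': "continuous_on {a..b} f'" and pos: "\<forall>x\<in>{a..b}. 0 < f x"
  shows "Linf a b f \<le> integral {a..b} f / (b - a) + (b - a)/2 + integral {a..b} (\<lambda>x. (f' x)\<^sup>2) / 2"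
proof -
  have c: "continuous_on {a..b} f" using d by (metis DERIV_continuous continuous_on_eq_continuous_within)
  obtain y where y: "y \<in> {a..b}" "\<forall>z\<in>{a..b}. f y \<le> f z"
    using continuous_attains_inf[OF compact_Icc _ c] ab by auto
  have Iy: "(b - a) * f y \<le> integral {a..b} f"
  proof -
    have "integral {a..b} (\<lambda>x. f y) \<le> integral {a..b} f"
      by (rule integral_le) (use y c in \<open>auto intro: integrable_continuous_interval\<close>)
    then show ?thesis using ab by (simp add: mult.commute)
  qed
  have absI: "integral {a..b} (\<lambda>x. \<bar>f' x\<bar>) \<le> (b - a)/2 + integral {a..b} (\<lambda>x. (f' x)\<^sup>2) / 2"
  proof -
    have "integral {a..b} (\<lambda>x. \<bar>f' x\<bar>) \<le> integral {a..b} (\<lambda>x. 1/2 + (f' x)\<^sup>2 / 2)"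
    proof (rule integral_le)
      fix x
      have "0 \<le> (\<bar>f' x\<bar> - 1)\<^sup>2" by simp
      then show "\<bar>f' x\<bar> \<le> 1/2 + (f' x)\<^sup>2 / 2" by (simp add: power2_eq_square algebra_simps)
    qed (auto intro!: integrable_continuous_interval continuous_intros c')
    also have "\<dots> = (b - a)/2 + integral {a..b} (\<lambda>x. (f' x)\<^sup>2) / 2"
      using ab by (subst integral_add) (auto intro!: integrable_continuous_interval continuous_intros c' simp: integral_divide)
    finally show ?thesis .
  qed
  have pw: "f x \<le> integral {a..b} f / (b - a) + (b - a)/2 + integral {a..b} (\<lambda>x. (f' x)\<^sup>2) / 2"
    if x: "x \<in> {a..b}" for x
  proof -
    define l where "l = min x y"
    define r where "r = max x y"
    have sub: "{l..r} \<subseteq> {a..b}" using x y unfolding l_def r_def by auto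
    have lr: "l \<le> r" unfolding l_def r_def by simp
    have dd: "(f has_vector_derivative f' z) (at z within {l..r})" if "z \<in> {l..r}" for z
    proof -
      have "(f has_real_derivative f' z) (at z within {a..b})" using d that sub by blast
      then have "(f has_real_derivative f' z) (at z within {l..r})" using sub by (rule DERIV_subset)
      then show ?thesis by (simp add: has_real_derivative_iff_has_vector_derivative)
    qed
    have "(f' has_integral (f r - f l)) {l..r}" by (rule fundamental_theorem_of_calculus[OF lr dd])
    then have fi: "f r - f l = integral {l..r} f'" by (simp add: integral_unique)
    have i1: "integral {l..r} f' \<le> integral {l..r} (\<lambda>x. \<bar>f' x\<bar>)"
      by (rule integral_le) (auto intro!: integrable_continuous_interval continuous_intros continuous_on_subset[OF c' sub])
    have i2: "- integral {l..r} f' \<le> integral {l..r} (\<lambda>x. \<bar>f' x\<bar>)"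
    proof -
      have "integral {l..r} (\<lambda>x. - f' x) \<le> integral {l..r} (\<lambda>x. \<bar>f' x\<bar>)"
        by (rule integral_le) (auto intro!: integrable_continuous_interval continuous_intros continuous_on_subset[OF c' sub])
      then show ?thesis by (simp add: integral_neg)
    qed
    have i3: "integral {l..r} (\<lambda>x. \<bar>f' x\<bar>) \<le> integral {a..b} (\<lambda>x. \<bar>f' x\<bar>)"
      by (rule integral_subset_le[OF sub]) (auto intro!: integrable_continuous_interval continuous_intros continuous_on_subset[OF c' sub] c')
    have "f x - f y \<le> integral {a..b} (\<lambda>x. \<bar>f' x\<bar>)"
    proof (cases "x \<le> y")
      case True then have lx: "l = x" and ry: "r = y" unfolding l_def r_def by auto
      show ?thesis using fi i2 i3 unfolding lx ry by linarith
    next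
      case False then have ly: "l = y" and rx: "r = x" unfolding l_def r_def by auto
      show ?thesis using fi i1 i3 unfolding ly rx by linarith
    qed
    moreover have "f y \<le> integral {a..b} f / (b - a)" using Iy ab by (simp add: le_divide_eq mult.commute)
    ultimately show ?thesis using absI by linarith
  qed
  have "Linf a b f = (SUP x\<in>{a<..<b}. \<bar>f x\<bar>)" unfolding Linf_def ..
  also have "\<dots> \<le> integral {a..b} f / (b - a) + (b - a)/2 + integral {a..b} (\<lambda>x. (f' x)\<^sup>2) / 2"
  proof (rule cSUP_least)
    show "{a<..<b} \<noteq> {}" using ab by simp
    fix x assume x: "x \<in> {a<..<b}"
    then have "x \<in> {a..b}" by auto
    then show "\<bar>f x\<bar> \<le> integral {a..b} f / (b - a) + (b - a)/2 + integral {a..b} (\<lambda>x. (f' x)\<^sup>2) / 2"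
      using pw pos by fastforce
  qed
  finally show ?thesis .
qed


definition Qm :: "real \<Rightarrow> real \<Rightarrow> real \<Rightarrow> real \<Rightarrow> real \<Rightarrow> real \<Rightarrow> real \<Rightarrow> real \<Rightarrow> real \<Rightarrow> real" where
  "Qm L M eps chi1 chi2 lam1 lam2 a1 a2 =
     (chi1\<^sup>2/(2*eps) + chi2\<^sup>2/(2*eps)) * (L + M) + 3 * (lam1 + lam2) * L + (4 * a1 + a2) * M + 1"

lemma hh_cont: assumes "continuous_on S p" "\<forall>x\<in>S. 0 < p x" "0 < eps"
  shows "continuous_on S (\<lambda>x. hh eps (p x))"
proof -
  have "\<forall>x\<in>S. 3 * (p x)\<^sup>2 + eps \<noteq> 0" using assms(3) by (simp add: add_nonneg_pos less_imp_neq[symmetric])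
  then show ?thesis unfolding hh_def using assms(1) by (intro continuous_intros) auto
qed

lemma hdr_cont: assumes "continuous_on S p" "\<forall>x\<in>S. 0 < p x" "0 < eps"
  shows "continuous_on S (\<lambda>x. hdr eps (p x))"
proof -
  have "\<forall>x\<in>S. (3 * (p x)\<^sup>2 + eps)\<^sup>2 \<noteq> 0" using assms(3)
    by (simp add: add_nonneg_pos less_imp_neq[symmetric])
  then show ?thesis unfolding hdr_def using assms(1) by (intro continuous_intros) auto
qed

lemma int_const: "a \<le> b \<Longrightarrow> integral {a..b} (\<lambda>x. c::real) = c * (b - a)" by simp

locale ft2 = U: ft a b u ux uxx uxxx + V: ft a b v vx vxx vxxx
  for a b :: real and u ux uxx uxxx v vx vxx vxxx :: "real \<Rightarrow> real" +
  fixes ut vt :: "real \<Rightarrow> real" and eps al n1 n2 D1 D2 chi1 chi2 lam1 lam2 a1 a2 :: real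
  assumes eps: "0 < eps" "eps < 1" and al: "0 < al" "al \<le> 1/2"
    and n1: "1 \<le> n1" "n1 \<le> 2" and n2: "1 \<le> n2" "n2 \<le> 2"
    and pos: "0 < D1" "0 < D2" "0 < a1" "0 < a2" "0 < lam1" "0 < lam2"
    and u3: "uxxx a = 0" "uxxx b = 0" and v3: "vxxx a = 0" "vxxx b = 0"
    and cut: "continuous_on {a..b} ut" and cvt: "continuous_on {a..b} vt"
    and pdeu: "\<forall>x\<in>{a<..<b}. ((\<lambda>y. fluxU eps al D1 chi1 n1 (u y) (ux y) (uxxx y) (vx y))
           has_real_derivative (ut x - reacU eps lam1 a1 (u x) (v x))) (at x)"
    and pdev: "\<forall>x\<in>{a<..<b}. ((\<lambda>y. fluxV eps al D2 chi2 n2 (v y) (vx y) (vxxx y) (ux y))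
           has_real_derivative (vt x - reacV eps lam2 a2 (u x) (v x))) (at x)"
begin

definition "Ru x = hh eps (u x) * (lam1 - u x + a1 * v x)"
definition "Rux x = hdr eps (u x) * ux x * (lam1 - u x + a1 * v x) + hh eps (u x) * (- ux x + a1 * vx x)"
definition "Rv x = hh eps (v x) * (lam2 - v x - a2 * u x)"
definition "Rvx x = hdr eps (v x) * vx x * (lam2 - v x - a2 * u x) + hh eps (v x) * (- vx x - a2 * ux x)"

lemma dRu: "\<forall>x\<in>{a..b}. (Ru has_real_derivative Rux x) (at x within {a..b})"
proof
  fix x assume x: "x \<in> {a..b}"
  have h: "((\<lambda>y. hh eps (u y)) has_real_derivative hdr eps (u x) * ux x) (at x within {a..b})"
    using hh_deriv[OF eps(1)] U.d0 x by blast
  have "((\<lambda>y. hh eps (u y) * (lam1 - u y + a1 * v y)) has_real_derivative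
     (hdr eps (u x) * ux x) * (lam1 - u x + a1 * v x) + hh eps (u x) * (- ux x + a1 * vx x)) (at x within {a..b})"
    using h U.d0 V.d0 x by (auto intro!: derivative_eq_intros)
  then show "(Ru has_real_derivative Rux x) (at x within {a..b})"
    unfolding Ru_def[abs_def] Rux_def by (simp add: mult.assoc)
qed

lemma dRv: "\<forall>x\<in>{a..b}. (Rv has_real_derivative Rvx x) (at x within {a..b})"
proof
  fix x assume x: "x \<in> {a..b}"
  have h: "((\<lambda>y. hh eps (v y)) has_real_derivative hdr eps (v x) * vx x) (at x within {a..b})"
    using hh_deriv[OF eps(1)] V.d0 x by blast
  have "((\<lambda>y. hh eps (v y) * (lam2 - v y - a2 * u y)) has_real_derivative
     (hdr eps (v x) * vx x) * (lam2 - v x - a2 * u x) + hh eps (v x) * (- vx x - a2 * ux x)) (at x within {a..b})"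
    using h U.d0 V.d0 x by (auto intro!: derivative_eq_intros)
  then show "(Rv has_real_derivative Rvx x) (at x within {a..b})"
    unfolding Rv_def[abs_def] Rvx_def by (simp add: mult.assoc)
qed

lemma cRux: "continuous_on {a..b} Rux"
  unfolding Rux_def[abs_def]
  by (intro continuous_intros hh_cont hdr_cont U.c0 U.c1 V.c0 V.c1 U.ppos V.ppos eps)
lemma cRvx: "continuous_on {a..b} Rvx"
  unfolding Rvx_def[abs_def]
  by (intro continuous_intros hh_cont hdr_cont U.c0 U.c1 V.c0 V.c1 U.ppos V.ppos eps)
lemma cRu: "continuous_on {a..b} Ru" using dRu deriv_cont_on by blast
lemma cRv: "continuous_on {a..b} Rv" using dRv deriv_cont_on by blast

lemma est_u: "- integral {a..b} (\<lambda>x. uxx x * ut x) \<le> - D1 * integral {a..b} (\<lambda>x. (uxx x)\<^sup>2)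
           + chi1\<^sup>2/(2*eps) * integral {a..b} (\<lambda>x. (1 + u x) * (vx x)\<^sup>2)
           + integral {a..b} (\<lambda>x. ux x * Rux x)"
proof -
  have pde': "\<forall>x\<in>{a<..<b}. ((\<lambda>y. fluxU eps al D1 chi1 n1 (u y) (ux y) (uxxx y) (vx y))
           has_real_derivative (ut x - Ru x)) (at x)"
    using pdeu unfolding Ru_def reacU_eq .
  have "- integral {a..b} (\<lambda>x. uxx x * ut x) \<le> - D1 * integral {a..b} (\<lambda>x. (uxx x)\<^sup>2)
           + chi1\<^sup>2/(2*eps) * integral {a..b} (\<lambda>x. (1 + u x) * (vx x)\<^sup>2)
           - integral {a..b} (\<lambda>x. uxx x * Ru x)"
    by (rule U.flux_est[OF eps(1) al n1 pos(1) V.c1 V.bca V.bcb u3 cut cRu pde'])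
  moreover have "- integral {a..b} (\<lambda>x. uxx x * Ru x) = integral {a..b} (\<lambda>x. ux x * Rux x)"
    by (rule U.reac_ibp[OF dRu cRux])
  ultimately show ?thesis by linarith
qed

lemma est_v: "- integral {a..b} (\<lambda>x. vxx x * vt x) \<le> - D2 * integral {a..b} (\<lambda>x. (vxx x)\<^sup>2)
           + chi2\<^sup>2/(2*eps) * integral {a..b} (\<lambda>x. (1 + v x) * (ux x)\<^sup>2)
           + integral {a..b} (\<lambda>x. vx x * Rvx x)"
proof -
  have pde': "\<forall>x\<in>{a<..<b}. ((\<lambda>y. fluxU eps al D2 (-chi2) n2 (v y) (vx y) (vxxx y) (ux y))
           has_real_derivative (vt x - Rv x)) (at x)"
    using pdev unfolding Rv_def reacV_eq fluxV_eq .
  have "- integral {a..b} (\<lambda>x. vxx x * vt x) \<le> - D2 * integral {a..b} (\<lambda>x. (vxx x)\<^sup>2)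
           + (-chi2)\<^sup>2/(2*eps) * integral {a..b} (\<lambda>x. (1 + v x) * (ux x)\<^sup>2)
           - integral {a..b} (\<lambda>x. vxx x * Rv x)"
    by (rule V.flux_est[OF eps(1) al n2 pos(2) U.c1 U.bca U.bcb v3 cvt cRv pde'])
  moreover have "- integral {a..b} (\<lambda>x. vxx x * Rv x) = integral {a..b} (\<lambda>x. vx x * Rvx x)"
    by (rule V.reac_ibp[OF dRv cRvx])
  ultimately show ?thesis by simp
qed

lemma flux_zero:
  fixes p px pxxx qx pt R :: "real \<Rightarrow> real" and D chi n :: real
  assumes c0: "continuous_on {a..b} p" and c1: "continuous_on {a..b} px" and c3: "continuous_on {a..b} pxxx"
    and cqx: "continuous_on {a..b} qx" and ppos: "\<forall>x\<in>{a..b}. 0 < p x"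
    and bc: "px a = 0" "px b = 0" "pxxx a = 0" "pxxx b = 0" "qx a = 0" "qx b = 0"
    and pde: "\<forall>x\<in>{a<..<b}. ((\<lambda>y. fluxU eps al D chi n (p y) (px y) (pxxx y) (qx y))
               has_real_derivative (pt x - R x)) (at x)"
  shows "((\<lambda>x. pt x - R x) has_integral 0) {a..b}"
proof -
  define F where "F y = fluxU eps al D chi n (p y) (px y) (pxxx y) (qx y)" for y
  have pne: "\<And>x. x \<in> {a..b} \<Longrightarrow> p x \<noteq> 0" using ppos by force
  have dpos: "0 < p x powr (4 - n) + eps" if "x \<in> {a..b}" for x
    using ppos[rule_format, OF that] eps by (simp add: add_pos_pos)
  have cpow: "continuous_on {a..b} (\<lambda>x. p x powr r)" for r
    by (rule continuous_on_powr) (use c0 pne in \<open>auto intro: continuous_on_const\<close>)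
  have cpd: "continuous_on {a..b} (\<lambda>x. p x powr (4 - n) + eps)"
    by (intro continuous_intros cpow)
  have cF: "continuous_on {a..b} F"
    unfolding F_def fluxU_def
    apply (intro continuous_intros c0 c1 c3 cqx cpow cpd)
    using dpos pne by (auto simp: less_imp_neq[symmetric])
  have "((\<lambda>x. pt x - R x) has_integral (F b - F a)) {a..b}"
  proof (rule fundamental_theorem_of_calculus_interior[OF _ cF])
    show "a \<le> b" using U.ab by simp
    fix x assume x: "x \<in> {a<..<b}"
    then show "(F has_vector_derivative pt x - R x) (at x)"
      using pde unfolding F_def by (simp add: has_real_derivative_iff_has_vector_derivative[symmetric])
  qed
  moreover have "F b - F a = 0" unfolding F_def fluxU_def using bc by simp
  ultimately show ?thesis by simp
qed

lemma int_ut: "integral {a..b} ut = integral {a..b} Ru"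
proof -
  have pde': "\<forall>x\<in>{a<..<b}. ((\<lambda>y. fluxU eps al D1 chi1 n1 (u y) (ux y) (uxxx y) (vx y))
           has_real_derivative (ut x - Ru x)) (at x)"
    using pdeu unfolding Ru_def reacU_eq .
  have "((\<lambda>x. ut x - Ru x) has_integral 0) {a..b}"
    by (rule flux_zero[OF U.c0 U.c1 U.c3 V.c1 U.ppos U.bca U.bcb u3 V.bca V.bcb pde'])
  then have "integral {a..b} (\<lambda>x. ut x - Ru x) = 0" by (rule integral_unique)
  moreover have "integral {a..b} (\<lambda>x. ut x - Ru x) = integral {a..b} ut - integral {a..b} Ru"
    by (intro integral_diff U.int_c cut cRu)
  ultimately show ?thesis by simp
qed

lemma int_vt: "integral {a..b} vt = integral {a..b} Rv"
proof -
  have pde': "\<forall>x\<in>{a<..<b}. ((\<lambda>y. fluxU eps al D2 (-chi2) n2 (v y) (vx y) (vxxx y) (ux y))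
           has_real_derivative (vt x - Rv x)) (at x)"
    using pdev unfolding Rv_def reacV_eq fluxV_eq .
  have "((\<lambda>x. vt x - Rv x) has_integral 0) {a..b}"
    by (rule flux_zero[OF V.c0 V.c1 V.c3 U.c1 V.ppos V.bca V.bcb v3 U.bca U.bcb pde'])
  then have "integral {a..b} (\<lambda>x. vt x - Rv x) = 0" by (rule integral_unique)
  moreover have "integral {a..b} (\<lambda>x. vt x - Rv x) = integral {a..b} vt - integral {a..b} Rv"
    by (intro integral_diff U.int_c cvt cRv)
  ultimately show ?thesis by simp
qed

lemma Y_bound: "integral {a..b} ut + (a1/a2) * integral {a..b} vt
    \<le> (lam1 + a1 + lam2) * (integral {a..b} u + (a1/a2) * integral {a..b} v)"
proof -
  have "integral {a..b} ut + (a1/a2) * integral {a..b} vt = integral {a..b} (\<lambda>x. Ru x + (a1/a2) * Rv x)"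
    unfolding int_ut int_vt using pos by (subst integral_add) (auto intro!: U.int_c continuous_intros cRu cRv)
  also have "\<dots> \<le> integral {a..b} (\<lambda>x. (lam1 + a1 + lam2) * (u x + (a1/a2) * v x))"
  proof (rule integral_le)
    fix x assume x: "x \<in> {a..b}"
    have "0 < u x" "0 < v x" using U.ppos V.ppos x by auto
    then show "Ru x + (a1/a2) * Rv x \<le> (lam1 + a1 + lam2) * (u x + (a1/a2) * v x)"
      unfolding Ru_def Rv_def using Y_pw eps pos by simp
  qed (use pos in \<open>auto intro!: U.int_c continuous_intros cRu cRv U.c0 V.c0\<close>)
  also have "\<dots> = (lam1 + a1 + lam2) * (integral {a..b} u + (a1/a2) * integral {a..b} v)"
    by (subst integral_mult_right, subst integral_add) (use pos in \<open>auto intro!: U.int_c continuous_intros U.c0 V.c0\<close>)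
  finally show ?thesis .
qed

lemma Iu_nn: "0 \<le> integral {a..b} u"
  by (rule integral_nonneg) (use U.ppos in \<open>auto intro: U.int_c U.c0 less_imp_le\<close>)
lemma Iv_nn: "0 \<le> integral {a..b} v"
  by (rule integral_nonneg) (use V.ppos in \<open>auto intro: V.int_c V.c0 less_imp_le\<close>)

lemma fixed_bound:
  assumes M: "integral {a..b} u \<le> M" "integral {a..b} v \<le> M"
  shows "- integral {a..b} (\<lambda>x. uxx x * ut x) - integral {a..b} (\<lambda>x. vxx x * vt x)
     \<le> (Qm (b - a) M eps chi1 chi2 lam1 lam2 a1 a2)\<^sup>2 / min D1 D2 *
        (integral {a..b} (\<lambda>x. (ux x)\<^sup>2) + integral {a..b} (\<lambda>x. (vx x)\<^sup>2))"
proof -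
  define L where "L = b - a"
  have L0: "L > 0" using U.ab unfolding L_def by simp
  define Iu where "Iu = integral {a..b} u"
  define Iv where "Iv = integral {a..b} v"
  have Iu0: "0 \<le> Iu" and Iv0: "0 \<le> Iv" unfolding Iu_def Iv_def using Iu_nn Iv_nn by auto
  have M0: "0 \<le> M" using Iu0 M(1) unfolding Iu_def by linarith
  define Su where "Su = integral {a..b} (\<lambda>y. 2 * \<bar>ux y * uxx y\<bar>)"
  define Sv where "Sv = integral {a..b} (\<lambda>y. 2 * \<bar>vx y * vxx y\<bar>)"
  define S where "S = Su + Sv"
  have Su0: "0 \<le> Su" unfolding Su_def by (rule U.S_nonneg)
  have Sv0: "0 \<le> Sv" unfolding Sv_def by (rule V.S_nonneg)
  have S0: "0 \<le> S" unfolding S_def using Su0 Sv0 by simp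
  have uxS: "(ux x)\<^sup>2 \<le> S" if "x \<in> {a..b}" for x
    using U.sup_bound[OF that] Sv0 unfolding S_def Su_def by linarith
  have vxS: "(vx x)\<^sup>2 \<le> S" if "x \<in> {a..b}" for x
    using V.sup_bound[OF that] Su0 unfolding S_def Sv_def by linarith
  have uvS: "\<bar>ux x\<bar> * \<bar>vx x\<bar> \<le> S" if "x \<in> {a..b}" for x
  proof -
    have "\<bar>ux x\<bar> * \<bar>vx x\<bar> \<le> (ux x)\<^sup>2 + (vx x)\<^sup>2"
    proof -
      have "0 \<le> (\<bar>ux x\<bar> - \<bar>vx x\<bar>)\<^sup>2" by simp
      then have "2 * (\<bar>ux x\<bar> * \<bar>vx x\<bar>) \<le> (ux x)\<^sup>2 + (vx x)\<^sup>2" by (simp add: power2_eq_square algebra_simps)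
      moreover have "0 \<le> \<bar>ux x\<bar> * \<bar>vx x\<bar>" by simp
      ultimately show ?thesis by linarith
    qed
    moreover have "(ux x)\<^sup>2 + (vx x)\<^sup>2 \<le> S" using U.sup_bound[OF that] V.sup_bound[OF that]
      unfolding S_def Su_def Sv_def by linarith
    ultimately show ?thesis by linarith
  qed
  have upos: "0 < u x" "0 < v x" if "x \<in> {a..b}" for x using U.ppos V.ppos that by auto
  have iu1: "integral {a..b} (\<lambda>x. 1 + u x) = L + Iu" unfolding L_def Iu_def
    using U.ab by (subst integral_add) (auto intro!: U.int_c U.c0 continuous_intros)
  have iv1: "integral {a..b} (\<lambda>x. 1 + v x) = L + Iv" unfolding L_def Iv_def
    using U.ab by (subst integral_add) (auto intro!: U.int_c V.c0 continuous_intros)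
  have B1: "integral {a..b} (\<lambda>x. (1 + u x) * (vx x)\<^sup>2) \<le> S * (L + Iu)"
    unfolding iu1[symmetric]
  proof (rule weighted)
    show "\<forall>x\<in>{a..b}. 0 \<le> 1 + u x"
    proof
      fix x assume "x \<in> {a..b}"
      then have "0 < u x" by (rule upos(1))
      then show "0 \<le> 1 + u x" by simp
    qed
    show "\<forall>x\<in>{a..b}. (vx x)\<^sup>2 \<le> S" using vxS by blast
  qed (auto intro!: continuous_intros U.c0 V.c1)
  have B2: "integral {a..b} (\<lambda>x. (1 + v x) * (ux x)\<^sup>2) \<le> S * (L + Iv)"
    unfolding iv1[symmetric]
  proof (rule weighted)
    show "\<forall>x\<in>{a..b}. 0 \<le> 1 + v x"
    proof
      fix x assume "x \<in> {a..b}"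
      then have "0 < v x" by (rule upos(2))
      then show "0 \<le> 1 + v x" by simp
    qed
    show "\<forall>x\<in>{a..b}. (ux x)\<^sup>2 \<le> S" using uxS by blast
  qed (auto intro!: continuous_intros V.c0 U.c1)
  have B3: "integral {a..b} (\<lambda>x. ux x * Rux x) \<le> S * (3 * lam1 * L + 3 * a1 * Iv + a1 * Iu)"
  proof -
    have "integral {a..b} (\<lambda>x. ux x * Rux x) \<le> integral {a..b} (\<lambda>x. S * (3 * lam1 + 3 * a1 * v x + a1 * u x))"
    proof (rule integral_le)
      fix x assume x: "x \<in> {a..b}"
      have "ux x * Rux x \<le> 3 * (lam1 + a1 * v x) * (ux x)\<^sup>2 + a1 * u x * \<bar>ux x\<bar> * \<bar>vx x\<bar>"
        unfolding Rux_def using reacU_pw[OF upos[OF x] eps(1) pos(5) pos(3)] by simp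
      also have "\<dots> \<le> 3 * (lam1 + a1 * v x) * S + a1 * u x * S"
      proof (intro add_mono mult_left_mono)
        show "(ux x)\<^sup>2 \<le> S" by (rule uxS[OF x])
        show "0 \<le> 3 * (lam1 + a1 * v x)" using pos upos[OF x] by simp
        have "a1 * u x * (\<bar>ux x\<bar> * \<bar>vx x\<bar>) \<le> a1 * u x * S"
          using uvS[OF x] pos upos[OF x] by (intro mult_left_mono) auto
        then show "a1 * u x * \<bar>ux x\<bar> * \<bar>vx x\<bar> \<le> a1 * u x * S" by (simp add: mult.assoc)
      qed
      also have "\<dots> = S * (3 * lam1 + 3 * a1 * v x + a1 * u x)" by (simp add: algebra_simps)
      finally show "ux x * Rux x \<le> S * (3 * lam1 + 3 * a1 * v x + a1 * u x)" .
    qed (auto intro!: U.int_c continuous_intros U.c0 U.c1 V.c0 cRux)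
    also have "\<dots> = S * (3 * lam1 * L + 3 * a1 * Iv + a1 * Iu)"
      unfolding L_def Iu_def Iv_def using U.ab
      by (simp add: integral_add integral_mult_right U.int_c V.int_c U.c0 V.c0 continuous_intros algebra_simps)
    finally show ?thesis .
  qed
  have B4: "integral {a..b} (\<lambda>x. vx x * Rvx x) \<le> S * (3 * lam2 * L + a2 * Iv)"
  proof -
    have "integral {a..b} (\<lambda>x. vx x * Rvx x) \<le> integral {a..b} (\<lambda>x. S * (3 * lam2 + a2 * v x))"
    proof (rule integral_le)
      fix x assume x: "x \<in> {a..b}"
      have "vx x * Rvx x \<le> 3 * lam2 * (vx x)\<^sup>2 + a2 * v x * \<bar>vx x\<bar> * \<bar>ux x\<bar>"
        unfolding Rvx_def using reacV_pw[OF upos(2)[OF x] upos(1)[OF x] eps(1) pos(6) pos(4)] by simp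
      also have "\<dots> \<le> 3 * lam2 * S + a2 * v x * S"
      proof (intro add_mono mult_left_mono)
        show "(vx x)\<^sup>2 \<le> S" by (rule vxS[OF x])
        show "0 \<le> 3 * lam2" using pos by simp
        have "a2 * v x * (\<bar>ux x\<bar> * \<bar>vx x\<bar>) \<le> a2 * v x * S"
          using uvS[OF x] pos upos[OF x] by (intro mult_left_mono) auto
        then show "a2 * v x * \<bar>vx x\<bar> * \<bar>ux x\<bar> \<le> a2 * v x * S" by (simp add: mult_ac)
      qed
      also have "\<dots> = S * (3 * lam2 + a2 * v x)" by (simp add: algebra_simps)
      finally show "vx x * Rvx x \<le> S * (3 * lam2 + a2 * v x)" .
    qed (auto intro!: U.int_c continuous_intros V.c0 V.c1 cRvx)
    also have "\<dots> = S * (3 * lam2 * L + a2 * Iv)"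
      unfolding L_def Iv_def using U.ab
      by (simp add: integral_add integral_mult_right U.int_c V.int_c U.c0 V.c0 continuous_intros algebra_simps)
    finally show ?thesis .
  qed
  define c1 where "c1 = chi1\<^sup>2/(2*eps)"
  define c2 where "c2 = chi2\<^sup>2/(2*eps)"
  have c10: "0 \<le> c1" and c20: "0 \<le> c2" unfolding c1_def c2_def using eps by auto
  define Q where "Q = Qm (b - a) M eps chi1 chi2 lam1 lam2 a1 a2"
  have Qdef: "Q = (c1 + c2) * (L + M) + 3 * (lam1 + lam2) * L + (4 * a1 + a2) * M + 1"
    unfolding Q_def Qm_def c1_def c2_def L_def ..
  have W: "c1 * (L + Iu) + c2 * (L + Iv) + (3 * lam1 * L + 3 * a1 * Iv + a1 * Iu) + (3 * lam2 * L + a2 * Iv) \<le> Q"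
  proof -
    have "c1 * (L + Iu) \<le> c1 * (L + M)" using c10 M unfolding Iu_def by (intro mult_left_mono) auto
    moreover have "c2 * (L + Iv) \<le> c2 * (L + M)" using c20 M unfolding Iv_def by (intro mult_left_mono) auto
    moreover have "3 * a1 * Iv \<le> 3 * a1 * M" using pos M unfolding Iv_def by simp
    moreover have "a1 * Iu \<le> a1 * M" using pos M unfolding Iu_def by simp
    moreover have "a2 * Iv \<le> a2 * M" using pos M unfolding Iv_def by simp
    ultimately show ?thesis unfolding Qdef by (simp add: algebra_simps)
  qed
  have Q0: "Q > 0" unfolding Qdef using c10 c20 L0 M0 pos
    by (intro add_nonneg_pos add_nonneg_nonneg mult_nonneg_nonneg) auto
  define Dm where "Dm = min D1 D2"
  have Dm0: "Dm > 0" unfolding Dm_def using pos by simp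
  define Au where "Au = integral {a..b} (\<lambda>x. (uxx x)\<^sup>2)"
  define Av where "Av = integral {a..b} (\<lambda>x. (vxx x)\<^sup>2)"
  define Eu where "Eu = integral {a..b} (\<lambda>x. (ux x)\<^sup>2)"
  define Ev where "Ev = integral {a..b} (\<lambda>x. (vx x)\<^sup>2)"
  have Au0: "0 \<le> Au" unfolding Au_def by (rule integral_nonneg) (auto intro!: U.int_c continuous_intros U.c2)
  have Av0: "0 \<le> Av" unfolding Av_def by (rule integral_nonneg) (auto intro!: V.int_c continuous_intros V.c2)
  define dl where "dl = Dm / Q"
  have dl0: "dl > 0" unfolding dl_def using Dm0 Q0 by simp
  have Y1: "Su \<le> dl * Au + (1/dl) * Eu" unfolding Su_def Au_def Eu_def by (rule U.young_S[OF dl0])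
  have Y2: "Sv \<le> dl * Av + (1/dl) * Ev" unfolding Sv_def Av_def Ev_def by (rule V.young_S[OF dl0])
  have QS: "Q * S \<le> Dm * (Au + Av) + Q\<^sup>2 / Dm * (Eu + Ev)"
  proof -
    have "dl * (Au + Av) + (1/dl) * (Eu + Ev) = (dl * Au + (1/dl) * Eu) + (dl * Av + (1/dl) * Ev)"
      by (simp add: algebra_simps add_divide_distrib)
    then have "S \<le> dl * (Au + Av) + (1/dl) * (Eu + Ev)" unfolding S_def using Y1 Y2 by linarith
    then have "Q * S \<le> Q * (dl * (Au + Av) + (1/dl) * (Eu + Ev))"
      using Q0 by (intro mult_left_mono) auto
    also have "\<dots> = Dm * (Au + Av) + Q\<^sup>2 / Dm * (Eu + Ev)"
      unfolding dl_def using Q0 Dm0 by (simp add: field_simps power2_eq_square)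
    finally show ?thesis .
  qed
  have tot: "- integral {a..b} (\<lambda>x. uxx x * ut x) - integral {a..b} (\<lambda>x. vxx x * vt x)
      \<le> - D1 * Au - D2 * Av + S * (c1 * (L + Iu) + c2 * (L + Iv) + (3 * lam1 * L + 3 * a1 * Iv + a1 * Iu) + (3 * lam2 * L + a2 * Iv))"
  proof -
    have "c1 * integral {a..b} (\<lambda>x. (1 + u x) * (vx x)\<^sup>2) \<le> c1 * (S * (L + Iu))"
      using B1 c10 by (rule mult_left_mono)
    moreover have "c2 * integral {a..b} (\<lambda>x. (1 + v x) * (ux x)\<^sup>2) \<le> c2 * (S * (L + Iv))"
      using B2 c20 by (rule mult_left_mono)
    ultimately show ?thesis using est_u est_v B3 B4 unfolding c1_def c2_def Au_def Av_def
      by (simp add: algebra_simps)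
  qed
  also have "\<dots> \<le> - D1 * Au - D2 * Av + S * Q" using W S0 by (simp add: mult_left_mono)
  also have "\<dots> \<le> - D1 * Au - D2 * Av + Dm * (Au + Av) + Q\<^sup>2 / Dm * (Eu + Ev)"
    using QS by (simp add: mult.commute)
  also have "\<dots> \<le> Q\<^sup>2 / Dm * (Eu + Ev)"
  proof -
    have "Dm * Au \<le> D1 * Au" unfolding Dm_def using Au0 by (intro mult_right_mono) auto
    moreover have "Dm * Av \<le> D2 * Av" unfolding Dm_def using Av0 by (intro mult_right_mono) auto
    ultimately show ?thesis by (simp add: algebra_simps)
  qed
  finally show ?thesis unfolding Q_def Dm_def Eu_def Ev_def .
qed

end


lemma int_cont_param:
  fixes f :: "real \<Rightarrow> real \<Rightarrow> real"
  assumes "continuous_on ({a..b} \<times> S) (\<lambda>(x,t). f x t)"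
  shows "continuous_on S (\<lambda>t. integral {a..b} (\<lambda>x. f x t))"
proof -
  have "continuous_on (S \<times> cbox a b) (\<lambda>(t,x). f x t)"
    using continuous_on_swap_args[OF assms] by simp
  from integral_continuous_on_param[OF this] show ?thesis by simp
qed

lemma int_deriv_param:
  fixes f f' :: "real \<Rightarrow> real \<Rightarrow> real"
  assumes S: "open S" "convex S" "t \<in> S"
    and d: "\<forall>s\<in>S. \<forall>x\<in>{a..b}. ((\<lambda>s. f x s) has_real_derivative f' x s) (at s)"
    and c': "continuous_on ({a..b} \<times> S) (\<lambda>(x,s). f' x s)"
    and c: "\<forall>s\<in>S. continuous_on {a..b} (\<lambda>x. f x s)"
  shows "((\<lambda>s. integral {a..b} (\<lambda>x. f x s)) has_real_derivative integral {a..b} (\<lambda>x. f' x t)) (at t)"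
proof -
  have "((\<lambda>s. integral (cbox a b) (\<lambda>x. f x s)) has_field_derivative integral (cbox a b) (\<lambda>x. f' x t)) (at t within S)"
  proof (rule leibniz_rule_field_derivative[where f="\<lambda>s x. f x s" and fx="\<lambda>s x. f' x s"])
    fix s x assume "s \<in> S" "x \<in> cbox a b"
    then show "((\<lambda>s. f x s) has_field_derivative f' x s) (at s within S)"
      using d by (auto intro: has_field_derivative_at_within)
  next
    fix s assume "s \<in> S"
    then show "(\<lambda>x. f x s) integrable_on cbox a b" using c by (auto intro: integrable_continuous_interval)
  next
    show "continuous_on (S \<times> cbox a b) (\<lambda>(s, x). f' x s)" using continuous_on_swap_args[OF c'] by simp
  qed (use S in auto)
  then show ?thesis using at_within_open[OF S(3) S(1)] by simp
qed

lemma tint_shape: assumes "0 < Tm"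
  shows "\<exists>r. 0 < r \<and> tint Tm = {0<..<r} \<and> tint0 Tm = {0..<r} \<or> (tint Tm = {0<..} \<and> tint0 Tm = {0..})"
proof (cases Tm)
  case (real r)
  then show ?thesis using assms by (intro disjI1 exI[of _ r]) (auto simp: tint_def tint0_def)
next
  case PInf
  then show ?thesis by (auto simp: tint_def tint0_def)
next
  case MInf
  then show ?thesis using assms by simp
qed

lemma tint_open: "0 < Tm \<Longrightarrow> open (tint Tm)"
  using tint_shape by (metis open_greaterThan open_greaterThanLessThan)
lemma tint_convex: "0 < Tm \<Longrightarrow> convex (tint Tm)"
  using tint_shape by (metis convex_real_interval(3) convex_real_interval(8))
lemma tint_sub: "tint Tm \<subseteq> tint0 Tm" by (auto simp: tint_def tint0_def)
lemma tint0_Icc: "t \<in> tint Tm \<Longrightarrow> {0..t} \<subseteq> tint0 Tm"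
  by (auto simp: tint_def tint0_def) (meson ereal_less_eq(3) le_less_trans)
lemma tint_open_int: "t \<in> tint Tm \<Longrightarrow> 0 < s \<Longrightarrow> s < t \<Longrightarrow> s \<in> tint Tm"
  by (auto simp: tint_def) (meson ereal_less_eq(3) le_less_trans less_imp_le)
lemma zero_tint0: "0 < Tm \<Longrightarrow> 0 \<in> tint0 Tm" by (auto simp: tint0_def zero_ereal_def)

theorem lemma2p6:
  fixes a b D1 D2 a1 a2 lam1 lam2 chi1 chi2 alpha n1 n2 eps T :: real
    and u0 u0x v0 v0x :: "real \<Rightarrow> real"
    and U V :: "real \<Rightarrow> nat \<Rightarrow> real \<Rightarrow> real"
    and Tm :: ereal
    and u ux uxx uxxx uxxxx ut v vx vxx vxxx vxxxx vt :: "real \<Rightarrow> real \<Rightarrow> real"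
  assumes ab: "a < b"
    and pos: "0 < D1" "0 < D2" "0 < a1" "0 < a2" "0 < lam1" "0 < lam2" "0 < chi1" "0 < chi2"
    and alpha: "0 < alpha" "alpha \<le> 1/2"
    and n1: "1 \<le> n1" "n1 \<le> 2" and n2: "1 \<le> n2" "n2 \<le> 2"
    and IE_u0: "W12_pos a b u0 u0x" and IE_v0: "W12_pos a b v0 v0x"
    and IE_U: "approx_data a b u0 u0x U" and IE_V: "approx_data a b v0 v0x V"
    and eps: "0 < eps" "eps < 1"
    and T: "0 < T"
    and Tm: "0 < Tm"
    and reg_u: "classical_comp a b Tm u ux uxx uxxx uxxxx ut"
    and reg_v: "classical_comp a b Tm v vx vxx vxxx vxxxx vt"
    and posit: "\<forall>t\<in>tint0 Tm. \<forall>x\<in>{a..b}. 0 < u x t \<and> 0 < v x t"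
    and init: "\<forall>x\<in>{a..b}. u x 0 = U eps 0 x \<and> v x 0 = V eps 0 x"
    and bc: "\<forall>t\<in>tint Tm. ux a t = 0 \<and> ux b t = 0 \<and> uxxx a t = 0 \<and> uxxx b t = 0 \<and>
                          vx a t = 0 \<and> vx b t = 0 \<and> vxxx a t = 0 \<and> vxxx b t = 0"
    and pde_u: "\<forall>t\<in>tint Tm. \<forall>x\<in>{a<..<b}.
        ((\<lambda>y. fluxU eps alpha D1 chi1 n1 (u y t) (ux y t) (uxxx y t) (vx y t))
           has_real_derivative (ut x t - reacU eps lam1 a1 (u x t) (v x t))) (at x)"
    and pde_v: "\<forall>t\<in>tint Tm. \<forall>x\<in>{a<..<b}.
        ((\<lambda>y. fluxV eps alpha D2 chi2 n2 (v y t) (vx y t) (vxxx y t) (ux y t))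
           has_real_derivative (vt x t - reacV eps lam2 a2 (u x t) (v x t))) (at x)"
    and maxT: "maximal_time Tm (\<lambda>t. W22n a b (\<lambda>x. u x t) (\<lambda>x. ux x t) (\<lambda>x. uxx x t)
                                  + Linf a b (\<lambda>x. 1 / u x t)
                                  + W22n a b (\<lambda>x. v x t) (\<lambda>x. vx x t) (\<lambda>x. vxx x t)
                                  + Linf a b (\<lambda>x. 1 / v x t))"
  shows "\<exists>C>0. \<forall>t. 0 < t \<and> t < T \<and> ereal t < Tm \<longrightarrow>
           integral {a..b} (\<lambda>x. (ux x t)\<^sup>2) + integral {a..b} (\<lambda>x. (vx x t)\<^sup>2) \<le> C \<and>
           Linf a b (\<lambda>x. u x t) + Linf a b (\<lambda>x. v x t) \<le> C"
proof -
  have U0: "\<forall>t\<in>tint0 Tm. \<forall>x\<in>{a..b}. ((\<lambda>y. u y t) has_real_derivative ux x t) (at x within {a..b})"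
    using reg_u unfolding classical_comp_def by blast
  have U1: "\<forall>t\<in>tint Tm. \<forall>x\<in>{a..b}.
        ((\<lambda>y. ux y t) has_real_derivative uxx x t) (at x within {a..b}) \<and>
        ((\<lambda>y. uxx y t) has_real_derivative uxxx x t) (at x within {a..b}) \<and>
        ((\<lambda>y. uxxx y t) has_real_derivative uxxxx x t) (at x within {a..b}) \<and>
        ((\<lambda>s. u x s) has_real_derivative ut x t) (at t)"
    using reg_u unfolding classical_comp_def by blast
  have Uc: "continuous_on ({a..b} \<times> tint0 Tm) (\<lambda>(x,t). u x t)"
     "continuous_on ({a..b} \<times> tint0 Tm) (\<lambda>(x,t). ux x t)"
     "continuous_on ({a..b} \<times> tint Tm) (\<lambda>(x,t). uxx x t)"
     "continuous_on ({a..b} \<times> tint Tm) (\<lambda>(x,t). ut x t)"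
    using reg_u unfolding classical_comp_def by blast+
  have V0: "\<forall>t\<in>tint0 Tm. \<forall>x\<in>{a..b}. ((\<lambda>y. v y t) has_real_derivative vx x t) (at x within {a..b})"
    using reg_v unfolding classical_comp_def by blast
  have V1: "\<forall>t\<in>tint Tm. \<forall>x\<in>{a..b}.
        ((\<lambda>y. vx y t) has_real_derivative vxx x t) (at x within {a..b}) \<and>
        ((\<lambda>y. vxx y t) has_real_derivative vxxx x t) (at x within {a..b}) \<and>
        ((\<lambda>y. vxxx y t) has_real_derivative vxxxx x t) (at x within {a..b}) \<and>
        ((\<lambda>s. v x s) has_real_derivative vt x t) (at t)"
    using reg_v unfolding classical_comp_def by blast
  have Vc: "continuous_on ({a..b} \<times> tint0 Tm) (\<lambda>(x,t). v x t)"
     "continuous_on ({a..b} \<times> tint0 Tm) (\<lambda>(x,t). vx x t)"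
     "continuous_on ({a..b} \<times> tint Tm) (\<lambda>(x,t). vxx x t)"
     "continuous_on ({a..b} \<times> tint Tm) (\<lambda>(x,t). vt x t)"
    using reg_v unfolding classical_comp_def by blast+
  have opn: "open (tint Tm)" by (rule tint_open[OF Tm])
  have cvx: "convex (tint Tm)" by (rule tint_convex[OF Tm])
  have inst: "ft2 a b (\<lambda>x. u x t) (\<lambda>x. ux x t) (\<lambda>x. uxx x t) (\<lambda>x. uxxx x t)
      (\<lambda>x. v x t) (\<lambda>x. vx x t) (\<lambda>x. vxx x t) (\<lambda>x. vxxx x t) (\<lambda>x. ut x t) (\<lambda>x. vt x t)
      eps alpha n1 n2 D1 D2 chi1 chi2 lam1 lam2 a1 a2" if t: "t \<in> tint Tm" for t
  proof -
    have t0: "t \<in> tint0 Tm" using t tint_sub by blast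
    have ftu: "ft a b (\<lambda>x. u x t) (\<lambda>x. ux x t) (\<lambda>x. uxx x t) (\<lambda>x. uxxx x t)"
    proof
      show "a < b" by (rule ab)
      show "\<forall>x\<in>{a..b}. ((\<lambda>x. u x t) has_real_derivative ux x t) (at x within {a..b})" using U0 t0 by blast
      show "\<forall>x\<in>{a..b}. ((\<lambda>x. ux x t) has_real_derivative uxx x t) (at x within {a..b})" using U1 t by blast
      show "\<forall>x\<in>{a..b}. ((\<lambda>x. uxx x t) has_real_derivative uxxx x t) (at x within {a..b})" using U1 t by blast
      have "\<forall>x\<in>{a..b}. ((\<lambda>x. uxxx x t) has_real_derivative uxxxx x t) (at x within {a..b})" using U1 t by blast
      then show "continuous_on {a..b} (\<lambda>x. uxxx x t)" by (rule deriv_cont_on)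
      show "\<forall>x\<in>{a..b}. 0 < u x t" using posit t0 by blast
      show "ux a t = 0" "ux b t = 0" using bc t by auto
    qed
    have ftv: "ft a b (\<lambda>x. v x t) (\<lambda>x. vx x t) (\<lambda>x. vxx x t) (\<lambda>x. vxxx x t)"
    proof
      show "a < b" by (rule ab)
      show "\<forall>x\<in>{a..b}. ((\<lambda>x. v x t) has_real_derivative vx x t) (at x within {a..b})" using V0 t0 by blast
      show "\<forall>x\<in>{a..b}. ((\<lambda>x. vx x t) has_real_derivative vxx x t) (at x within {a..b})" using V1 t by blast
      show "\<forall>x\<in>{a..b}. ((\<lambda>x. vxx x t) has_real_derivative vxxx x t) (at x within {a..b})" using V1 t by blast
      have "\<forall>x\<in>{a..b}. ((\<lambda>x. vxxx x t) has_real_derivative vxxxx x t) (at x within {a..b})" using V1 t by blast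
      then show "continuous_on {a..b} (\<lambda>x. vxxx x t)" by (rule deriv_cont_on)
      show "\<forall>x\<in>{a..b}. 0 < v x t" using posit t0 by blast
      show "vx a t = 0" "vx b t = 0" using bc t by auto
    qed
    show ?thesis
    proof (intro ft2.intro ftu ftv ft2_axioms.intro)
      show "continuous_on {a..b} (\<lambda>x. ut x t)" by (rule cont_slice[OF Uc(4) t])
      show "continuous_on {a..b} (\<lambda>x. vt x t)" by (rule cont_slice[OF Vc(4) t])
      show "\<forall>x\<in>{a<..<b}. ((\<lambda>y. fluxU eps alpha D1 chi1 n1 (u y t) (ux y t) (uxxx y t) (vx y t))
           has_real_derivative (ut x t - reacU eps lam1 a1 (u x t) (v x t))) (at x)" using pde_u t by blast
      show "\<forall>x\<in>{a<..<b}. ((\<lambda>y. fluxV eps alpha D2 chi2 n2 (v y t) (vx y t) (vxxx y t) (ux y t))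
           has_real_derivative (vt x t - reacV eps lam2 a2 (u x t) (v x t))) (at x)" using pde_v t by blast
    qed (use eps alpha n1 n2 pos bc t in auto)
  qed
  define c where "c = a1 / a2"
  have c0: "0 < c" unfolding c_def using pos by simp
  define K0 where "K0 = lam1 + a1 + lam2"
  have K00: "0 < K0" unfolding K0_def using pos by simp
  define Iu where "Iu s = integral {a..b} (\<lambda>x. u x s)" for s
  define Iv where "Iv s = integral {a..b} (\<lambda>x. v x s)" for s
  define Y where "Y s = Iu s + c * Iv s" for s
  have Iu0: "0 \<le> Iu s" "0 \<le> Iv s" if "s \<in> tint0 Tm" for s
  proof -
    have p: "\<forall>x\<in>{a..b}. 0 < u x s \<and> 0 < v x s" using posit that by blast
    show "0 \<le> Iu s" unfolding Iu_def
    proof (rule integral_nonneg)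
      show "(\<lambda>x. u x s) integrable_on {a..b}" by (rule integrable_continuous_interval[OF cont_slice[OF Uc(1) that]])
      fix x assume "x \<in> {a..b}" then show "0 \<le> u x s" using p by (auto intro: less_imp_le)
    qed
    show "0 \<le> Iv s" unfolding Iv_def
    proof (rule integral_nonneg)
      show "(\<lambda>x. v x s) integrable_on {a..b}" by (rule integrable_continuous_interval[OF cont_slice[OF Vc(1) that]])
      fix x assume "x \<in> {a..b}" then show "0 \<le> v x s" using p by (auto intro: less_imp_le)
    qed
  qed
  have Ycont: "continuous_on (tint0 Tm) Y"
    unfolding Y_def[abs_def] Iu_def Iv_def by (intro continuous_intros int_cont_param Uc(1) Vc(1))
  have Yder: "(Y has_real_derivative (integral {a..b} (\<lambda>x. ut x s) + c * integral {a..b} (\<lambda>x. vt x s))) (at s)"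
    if s: "s \<in> tint Tm" for s
  proof -
    have cu: "\<forall>s\<in>tint Tm. continuous_on {a..b} (\<lambda>x. u x s)" using cont_slice[OF Uc(1)] tint_sub by blast
    have cv: "\<forall>s\<in>tint Tm. continuous_on {a..b} (\<lambda>x. v x s)" using cont_slice[OF Vc(1)] tint_sub by blast
    have du: "\<forall>s\<in>tint Tm. \<forall>x\<in>{a..b}. ((\<lambda>s. u x s) has_real_derivative ut x s) (at s)" using U1 by blast
    have dv: "\<forall>s\<in>tint Tm. \<forall>x\<in>{a..b}. ((\<lambda>s. v x s) has_real_derivative vt x s) (at s)" using V1 by blast
    have "((\<lambda>s. integral {a..b} (\<lambda>x. u x s) + c * integral {a..b} (\<lambda>x. v x s)) has_real_derivative
        (integral {a..b} (\<lambda>x. ut x s) + c * integral {a..b} (\<lambda>x. vt x s))) (at s)"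
      by (rule DERIV_add[OF int_deriv_param[OF opn cvx s du Uc(4) cu] DERIV_cmult[OF int_deriv_param[OF opn cvx s dv Vc(4) cv]]])
    then show ?thesis unfolding Y_def[abs_def] Iu_def Iv_def .
  qed
  have Yineq: "integral {a..b} (\<lambda>x. ut x s) + c * integral {a..b} (\<lambda>x. vt x s) \<le> K0 * Y s"
    if s: "s \<in> tint Tm" for s
    using ft2.Y_bound[OF inst[OF s]] unfolding c_def K0_def Y_def Iu_def Iv_def .
  have Y00: "0 \<le> Y 0" unfolding Y_def using Iu0[OF zero_tint0[OF Tm]] c0 by simp
  define MY where "MY = Y 0 * exp (K0 * T)"
  have MY0: "0 \<le> MY" unfolding MY_def using Y00 by simp
  have Ybound: "Y t \<le> MY" if t: "t \<in> tint Tm" "t < T" for t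
  proof -
    have t0: "0 \<le> t" using t by (simp add: tint_def)
    have "Y t \<le> Y 0 * exp (K0 * t)"
    proof (rule gronwall[OF t0])
      show "continuous_on {0..t} Y" by (rule continuous_on_subset[OF Ycont tint0_Icc[OF t(1)]])
      fix s assume "0 < s" "s < t"
      then have s: "s \<in> tint Tm" using tint_open_int[OF t(1)] by blast
      show "(Y has_real_derivative (integral {a..b} (\<lambda>x. ut x s) + c * integral {a..b} (\<lambda>x. vt x s))) (at s) \<and>
         integral {a..b} (\<lambda>x. ut x s) + c * integral {a..b} (\<lambda>x. vt x s) \<le> K0 * Y s"
        using Yder[OF s] Yineq[OF s] by blast
    qed
    also have "\<dots> \<le> MY" unfolding MY_def using Y00 K00 t by (intro mult_left_mono) auto
    finally show ?thesis .
  qed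
  define M where "M = MY + MY / c"
  have M0: "0 \<le> M" unfolding M_def using MY0 c0 by simp
  have IuM: "Iu t \<le> M" "Iv t \<le> M" if t: "t \<in> tint Tm" "t < T" for t
  proof -
    have t0: "t \<in> tint0 Tm" using t tint_sub by blast
    note Yb = Ybound[OF t] and nn = Iu0[OF t0]
    have "0 \<le> c * Iv t" using nn c0 by simp
    moreover have "0 \<le> MY / c" using MY0 c0 by simp
    ultimately show "Iu t \<le> M" using Yb unfolding Y_def M_def by linarith
    have "c * Iv t \<le> MY" using Yb nn unfolding Y_def by linarith
    then have "Iv t \<le> MY / c" using c0 by (simp add: field_simps)
    then show "Iv t \<le> M" unfolding M_def using MY0 by linarith
  qed
  define Eu where "Eu s = integral {a..b} (\<lambda>x. (ux x s)\<^sup>2)" for s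
  define Ev where "Ev s = integral {a..b} (\<lambda>x. (vx x s)\<^sup>2)" for s
  define E where "E s = Eu s + Ev s" for s
  have Enn: "0 \<le> Eu s" "0 \<le> Ev s" if "s \<in> tint0 Tm" for s
    unfolding Eu_def Ev_def
    by (auto intro!: integral_nonneg integrable_continuous_interval continuous_intros
        cont_slice[OF Uc(2) that] cont_slice[OF Vc(2) that])
  have sqc: "continuous_on ({a..b} \<times> S) (\<lambda>(x,t). (f x t)\<^sup>2)"
    if "continuous_on ({a..b} \<times> S) (\<lambda>(x,t). f x t)" for f :: "real \<Rightarrow> real \<Rightarrow> real" and S
  proof -
    have "continuous_on ({a..b} \<times> S) ((\<lambda>y. y\<^sup>2) \<circ> (\<lambda>(x,t). f x t))"
      by (rule continuous_on_compose[OF that]) (intro continuous_intros)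
    moreover have "((\<lambda>y. y\<^sup>2) \<circ> (\<lambda>(x,t). f x t)) = (\<lambda>(x,t). (f x t)\<^sup>2)" by (auto simp: fun_eq_iff)
    ultimately show ?thesis by simp
  qed
  have Econt: "continuous_on (tint0 Tm) E"
    unfolding E_def[abs_def] Eu_def Ev_def by (intro continuous_intros int_cont_param sqc Uc(2) Vc(2))
  define KE where "KE = 2 * ((Qm (b - a) M eps chi1 chi2 lam1 lam2 a1 a2)\<^sup>2 / min D1 D2)"
  have KE0: "0 \<le> KE" unfolding KE_def using pos by simp
  define E' where "E' s = -2 * integral {a..b} (\<lambda>x. uxx x s * ut x s) + -2 * integral {a..b} (\<lambda>x. vxx x s * vt x s)" for s
  have Eder: "(E has_real_derivative E' s) (at s)" if s: "s \<in> tint Tm" for s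
  proof -
    have dx: "\<forall>s\<in>tint Tm. \<forall>x\<in>{a..b}. ((\<lambda>y. u y s) has_real_derivative ux x s) (at x within {a..b})"
      using U0 tint_sub by blast
    have dxx: "\<forall>s\<in>tint Tm. \<forall>x\<in>{a..b}. ((\<lambda>y. ux y s) has_real_derivative uxx x s) (at x within {a..b})"
      using U1 by blast
    have dt: "\<forall>s\<in>tint Tm. \<forall>x\<in>{a..b}. ((\<lambda>s. u x s) has_real_derivative ut x s) (at s)" using U1 by blast
    have bcu: "\<forall>s\<in>tint Tm. ux a s = 0 \<and> ux b s = 0" using bc by blast
    have dxv: "\<forall>s\<in>tint Tm. \<forall>x\<in>{a..b}. ((\<lambda>y. v y s) has_real_derivative vx x s) (at x within {a..b})"
      using V0 tint_sub by blast
    have dxxv: "\<forall>s\<in>tint Tm. \<forall>x\<in>{a..b}. ((\<lambda>y. vx y s) has_real_derivative vxx x s) (at x within {a..b})"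
      using V1 by blast
    have dtv: "\<forall>s\<in>tint Tm. \<forall>x\<in>{a..b}. ((\<lambda>s. v x s) has_real_derivative vt x s) (at s)" using V1 by blast
    have bcv: "\<forall>s\<in>tint Tm. vx a s = 0 \<and> vx b s = 0" using bc by blast
    show ?thesis unfolding E_def[abs_def] Eu_def Ev_def E'_def
      by (rule DERIV_add[OF deriv_energy[OF ab opn s dx dxx dt Uc(3) Uc(4) bcu]
            deriv_energy[OF ab opn s dxv dxxv dtv Vc(3) Vc(4) bcv]])
  qed
  have Eineq: "E' s \<le> KE * E s" if s: "s \<in> tint Tm" "s < T" for s
  proof -
    have "- integral {a..b} (\<lambda>x. uxx x s * ut x s) - integral {a..b} (\<lambda>x. vxx x s * vt x s)
     \<le> (Qm (b - a) M eps chi1 chi2 lam1 lam2 a1 a2)\<^sup>2 / min D1 D2 * E s"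
      using ft2.fixed_bound[OF inst[OF s(1)] IuM(1)[OF s, unfolded Iu_def] IuM(2)[OF s, unfolded Iv_def]]
      unfolding E_def Eu_def Ev_def .
    then show ?thesis unfolding E'_def KE_def by simp
  qed
  have E00: "0 \<le> E 0" unfolding E_def using Enn[OF zero_tint0[OF Tm]] by simp
  define EB where "EB = E 0 * exp (KE * T)"
  have EB0: "0 \<le> EB" unfolding EB_def using E00 by simp
  have Ebound: "E t \<le> EB" if t: "t \<in> tint Tm" "t < T" for t
  proof -
    have t0: "0 \<le> t" using t by (simp add: tint_def)
    have "E t \<le> E 0 * exp (KE * t)"
    proof (rule gronwall[OF t0])
      show "continuous_on {0..t} E" by (rule continuous_on_subset[OF Econt tint0_Icc[OF t(1)]])
      fix s assume "0 < s" "s < t"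
      then have s: "s \<in> tint Tm" "s < T" using tint_open_int[OF t(1)] t by auto
      show "(E has_real_derivative E' s) (at s) \<and> E' s \<le> KE * E s"
        using Eder[OF s(1)] Eineq[OF s] by blast
    qed
    also have "\<dots> \<le> EB" unfolding EB_def using E00 KE0 t by (intro mult_left_mono) (auto intro: mult_left_mono)
    finally show ?thesis .
  qed
  have Lu: "Linf a b (\<lambda>x. u x t) \<le> Iu t / (b - a) + (b - a)/2 + Eu t / 2"
    and Lv: "Linf a b (\<lambda>x. v x t) \<le> Iv t / (b - a) + (b - a)/2 + Ev t / 2"
    if t: "t \<in> tint Tm" for t
  proof -
    have t0: "t \<in> tint0 Tm" using t tint_sub by blast
    have du: "\<forall>x\<in>{a..b}. ((\<lambda>x. u x t) has_real_derivative ux x t) (at x within {a..b})" using U0 t0 by blast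
    have dv: "\<forall>x\<in>{a..b}. ((\<lambda>x. v x t) has_real_derivative vx x t) (at x within {a..b})" using V0 t0 by blast
    have pu: "\<forall>x\<in>{a..b}. 0 < u x t" and pv: "\<forall>x\<in>{a..b}. 0 < v x t" using posit t0 by blast+
    show "Linf a b (\<lambda>x. u x t) \<le> Iu t / (b - a) + (b - a)/2 + Eu t / 2"
      unfolding Iu_def Eu_def by (rule linf_bound[OF ab du cont_slice[OF Uc(2) t0] pu])
    show "Linf a b (\<lambda>x. v x t) \<le> Iv t / (b - a) + (b - a)/2 + Ev t / 2"
      unfolding Iv_def Ev_def by (rule linf_bound[OF ab dv cont_slice[OF Vc(2) t0] pv])
  qed
  define C where "C = EB + 2 * M / (b - a) + (b - a) + 1"
  have C0: "C > 0" unfolding C_def using EB0 M0 ab by (simp add: add_nonneg_pos)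
  show ?thesis
  proof (intro exI[of _ C] conjI allI impI C0)
    fix t assume "0 < t \<and> t < T \<and> ereal t < Tm"
    then have t: "t \<in> tint Tm" "t < T" by (auto simp: tint_def)
    have t0: "t \<in> tint0 Tm" using t tint_sub by blast
    have Et: "E t \<le> EB" by (rule Ebound[OF t])
    have "integral {a..b} (\<lambda>x. (ux x t)\<^sup>2) + integral {a..b} (\<lambda>x. (vx x t)\<^sup>2) = E t"
      unfolding E_def Eu_def Ev_def ..
    also have "\<dots> \<le> C" using Et M0 ab unfolding C_def by (simp add: add_increasing2)
    finally show "integral {a..b} (\<lambda>x. (ux x t)\<^sup>2) + integral {a..b} (\<lambda>x. (vx x t)\<^sup>2) \<le> C" .
    have "Iu t / (b - a) + Iv t / (b - a) \<le> 2 * M / (b - a)"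
    proof -
      have "Iu t + Iv t \<le> 2 * M" using IuM[OF t] by simp
      then have "(Iu t + Iv t) / (b - a) \<le> (2 * M) / (b - a)" using ab by (intro divide_right_mono) auto
      then show ?thesis by (simp add: add_divide_distrib)
    qed
    moreover have "Eu t / 2 + Ev t / 2 \<le> EB" using Et Enn[OF t0] unfolding E_def by simp
    moreover have "Linf a b (\<lambda>x. u x t) + Linf a b (\<lambda>x. v x t) \<le>
       (Iu t / (b - a) + Iv t / (b - a)) + (Eu t / 2 + Ev t / 2) + (b - a)"
    proof -
      have "Linf a b (\<lambda>x. u x t) + Linf a b (\<lambda>x. v x t) \<le>
         (Iu t / (b - a) + (b - a)/2 + Eu t / 2) + (Iv t / (b - a) + (b - a)/2 + Ev t / 2)"
        by (rule add_mono[OF Lu[OF t(1)] Lv[OF t(1)]])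
      also have "\<dots> = (Iu t / (b - a) + Iv t / (b - a)) + (Eu t / 2 + Ev t / 2) + (b - a)"
        by (simp add: field_simps)
      finally show ?thesis .
    qed
    ultimately show "Linf a b (\<lambda>x. u x t) + Linf a b (\<lambda>x. v x t) \<le> C"
    proof -
      assume h1: "Iu t / (b - a) + Iv t / (b - a) \<le> 2 * M / (b - a)"
        and h2: "Eu t / 2 + Ev t / 2 \<le> EB"
        and h3: "Linf a b (\<lambda>x. u x t) + Linf a b (\<lambda>x. v x t) \<le>
       (Iu t / (b - a) + Iv t / (b - a)) + (Eu t / 2 + Ev t / 2) + (b - a)"
      have "(Iu t / (b - a) + Iv t / (b - a)) + (Eu t / 2 + Ev t / 2) + (b - a) \<le> 2 * M / (b - a) + EB + (b - a)"
        by (intro add_mono h1 h2 order_refl)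
      also have "\<dots> \<le> C" unfolding C_def by simp
      finally show ?thesis using h3 by simp
    qed
  qed
qed


end
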